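(* Let $\alpha\in[1,2)$, let $X_k(m)$ be the triangular array of the context and $d_k:=4^{k^2}$. Define the $D[0,1]$-valued process $\mathbb W_n^{(\mathbf M)}(X)(t):=n^{-1/\alpha}\sum_{\frac1{2\alpha}\log n<k\le\frac1\alpha\log n}\sum_{j=1}^{\lfloor nt\rfloor}\big(X_k(j)-X_k(j+d_k)\big)$, $t\in[0,1]$. Then $\mathbb W_n^{(\mathbf M)}(X)$ converges in distribution in $(D[0,1],J_1)$ to an $S_\alpha\big((2\ln2)^{1/\alpha},0,0\big)$ Lévy motion.
   Context: $\log$ is base $2$. $S_\alpha(\sigma,\beta,\mu)$ denotes the stable law with characteristic function $\exp\{-\sigma^\alpha|\theta|^\alpha(1-i\beta\,\mathrm{sign}(\theta)\tan(\pi\alpha/2))+i\mu\theta\}$ ($\alpha\neq1$), resp. $\exp\{-\sigma|\theta|(1+i\beta\frac2\pi\mathrm{sign}(\theta)\ln|\theta|)+i\mu\theta\}$ ($\alpha=1$). An $S_\alpha(\sigma,\beta,0)$ Lévy motion is a process on $[0,1]$ with càdlàg paths, $\mathbb W_0=0$, independent increments and $\mathbb W_t-\mathbb W_s\sim S_\alpha(\sigma(t-s)^{1/\alpha},\beta,0)$ for $s<t$. Triangular array: on $(\Omega,\mathcal F,\mathbb P)$ let $\{X_k(m):k,m\in\mathbb N\}$ be independent with $X_k(m)\sim S_\alpha(k^{-1/\alpha},1,0)$. *)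

theory Defs
  imports "HOL-Probability.Probability"
begin

definition stable_cf :: "real \<Rightarrow> real \<Rightarrow> real \<Rightarrow> real \<Rightarrow> real \<Rightarrow> complex" where
  "stable_cf \<alpha> \<sigma> \<beta> \<mu> \<theta> =
     (if \<alpha> \<noteq> 1 then
        exp (- complex_of_real (\<sigma> powr \<alpha> * \<bar>\<theta>\<bar> powr \<alpha>)
               * (1 - \<i> * complex_of_real (\<beta> * sgn \<theta> * tan (pi * \<alpha> / 2)))
             + \<i> * complex_of_real (\<mu> * \<theta>))
      else
        exp (- complex_of_real (\<sigma> * \<bar>\<theta>\<bar>)
               * (1 + \<i> * complex_of_real (\<beta> * (2 / pi) * sgn \<theta> * ln \<bar>\<theta>\<bar>))
             + \<i> * complex_of_real (\<mu> * \<theta>)))"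

definition has_stable_law :: "'a measure \<Rightarrow> ('a \<Rightarrow> real) \<Rightarrow> real \<Rightarrow> real \<Rightarrow> real \<Rightarrow> real \<Rightarrow> bool" where
  "has_stable_law M Y \<alpha> \<sigma> \<beta> \<mu> \<longleftrightarrow>
     Y \<in> borel_measurable M \<and>
     (\<forall>\<theta>. char (distr M borel Y) \<theta> = stable_cf \<alpha> \<sigma> \<beta> \<mu> \<theta>)"

text \<open>Cadlag paths on [0,1] (values outside [0,1] are irrelevant).\<close>
definition cadlag01 :: "(real \<Rightarrow> real) \<Rightarrow> bool" where
  "cadlag01 x \<longleftrightarrow>
     (\<forall>t\<in>{0..<1}. (x \<longlongrightarrow> x t) (at_right t)) \<and>
     (\<forall>t\<in>{0<..1}. \<exists>l. (x \<longlongrightarrow> l) (at_left t))"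

definition time_changes01 :: "(real \<Rightarrow> real) set" where
  "time_changes01 = {r. strict_mono_on {0..1} r \<and> continuous_on {0..1} r \<and> r 0 = 0 \<and> r 1 = 1}"

definition skorokhod_J1 :: "(real \<Rightarrow> real) \<Rightarrow> (real \<Rightarrow> real) \<Rightarrow> real" where
  "skorokhod_J1 x y =
     Inf {e. \<exists>r\<in>time_changes01. (\<forall>t\<in>{0..1}. \<bar>r t - t\<bar> \<le> e) \<and>
                                 (\<forall>t\<in>{0..1}. \<bar>x t - y (r t)\<bar> \<le> e)}"

definition bdd_J1_continuous :: "((real \<Rightarrow> real) \<Rightarrow> real) \<Rightarrow> bool" where
  "bdd_J1_continuous f \<longleftrightarrow>
     (\<exists>B. \<forall>x. cadlag01 x \<longrightarrow> \<bar>f x\<bar> \<le> B) \<and>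
     (\<forall>x. cadlag01 x \<longrightarrow> (\<forall>e>0. \<exists>d>0. \<forall>y. cadlag01 y \<longrightarrow> skorokhod_J1 x y < d \<longrightarrow> \<bar>f y - f x\<bar> < e))"

definition converges_in_dist_J1 ::
  "'a measure \<Rightarrow> (nat \<Rightarrow> 'a \<Rightarrow> real \<Rightarrow> real) \<Rightarrow> 'b measure \<Rightarrow> ('b \<Rightarrow> real \<Rightarrow> real) \<Rightarrow> bool" where
  "converges_in_dist_J1 M Z N W \<longleftrightarrow>
     (\<forall>f. bdd_J1_continuous f \<longrightarrow>
        (\<forall>n. (\<lambda>\<omega>. f (Z n \<omega>)) \<in> borel_measurable M) \<and>
        (\<lambda>\<omega>. f (W \<omega>)) \<in> borel_measurable N \<and>
        (\<lambda>n. \<integral>\<omega>. f (Z n \<omega>) \<partial>M) \<longlonglongrightarrow> (\<integral>\<omega>. f (W \<omega>) \<partial>N))"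

definition levy_motion :: "'b measure \<Rightarrow> ('b \<Rightarrow> real \<Rightarrow> real) \<Rightarrow> real \<Rightarrow> real \<Rightarrow> real \<Rightarrow> bool" where
  "levy_motion N W \<alpha> \<sigma> \<beta> \<longleftrightarrow>
     prob_space N \<and>
     (\<forall>t\<in>{0..1}. (\<lambda>\<omega>. W \<omega> t) \<in> borel_measurable N) \<and>
     (\<forall>\<omega>\<in>space N. cadlag01 (W \<omega>) \<and> W \<omega> 0 = 0) \<and>
     (\<forall>(n::nat) (ts::nat \<Rightarrow> real). 0 \<le> ts 0 \<longrightarrow> ts n \<le> 1 \<longrightarrow> strict_mono_on {0..n} ts \<longrightarrow>
        prob_space.indep_vars N (\<lambda>_. borel) (\<lambda>i \<omega>. W \<omega> (ts i) - W \<omega> (ts (i - 1))) {1..n}) \<and>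
     (\<forall>s t. 0 \<le> s \<longrightarrow> s < t \<longrightarrow> t \<le> 1 \<longrightarrow>
        has_stable_law N (\<lambda>\<omega>. W \<omega> t - W \<omega> s) \<alpha> (\<sigma> * (t - s) powr (1 / \<alpha>)) \<beta> 0)"

definition triangular_array :: "'a measure \<Rightarrow> (nat \<Rightarrow> nat \<Rightarrow> 'a \<Rightarrow> real) \<Rightarrow> real \<Rightarrow> bool" where
  "triangular_array M X \<alpha> \<longleftrightarrow>
     prob_space M \<and>
     prob_space.indep_vars M (\<lambda>_. borel) (\<lambda>(k, m). X k m) {(k, m). 1 \<le> k \<and> 1 \<le> m} \<and>
     (\<forall>k m. 1 \<le> k \<longrightarrow> 1 \<le> m \<longrightarrow> has_stable_law M (X k m) \<alpha> (real k powr (- 1 / \<alpha>)) 1 0)"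

definition WM :: "real \<Rightarrow> (nat \<Rightarrow> nat \<Rightarrow> 'a \<Rightarrow> real) \<Rightarrow> nat \<Rightarrow> 'a \<Rightarrow> real \<Rightarrow> real" where
  "WM \<alpha> X n \<omega> t =
     real n powr (- 1 / \<alpha>) *
     (\<Sum>k\<in>{k::nat. log 2 (real n) / (2 * \<alpha>) < real k \<and> real k \<le> log 2 (real n) / \<alpha>}.
        \<Sum>j=1..nat \<lfloor>real n * t\<rfloor>. X k j \<omega> - X k (j + 4 ^ (k^2)) \<omega>)"

end

theory Submission
  imports Defs "HOL-Analysis.Harmonic_Numbers" "HOL-Real_Asymp.Real_Asymp"
begin

lemma id_time_change: "(\<lambda>t. t) \<in> time_changes01"
  unfolding time_changes01_def by (auto simp: strict_mono_on_def intro: continuous_on_id)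

lemma J1_le:
  assumes "r \<in> time_changes01" "\<forall>t\<in>{0..1}. \<bar>r t - t\<bar> \<le> e" "\<forall>t\<in>{0..1}. \<bar>x t - y (r t)\<bar> \<le> e"
  shows "skorokhod_J1 x y \<le> e"
  unfolding skorokhod_J1_def
proof (rule cInf_lower)
  show "e \<in> {e. \<exists>r\<in>time_changes01. (\<forall>t\<in>{0..1}. \<bar>r t - t\<bar> \<le> e) \<and> (\<forall>t\<in>{0..1}. \<bar>x t - y (r t)\<bar> \<le> e)}"
    using assms by blast
  show "bdd_below {e. \<exists>r\<in>time_changes01. (\<forall>t\<in>{0..1}. \<bar>r t - t\<bar> \<le> e) \<and> (\<forall>t\<in>{0..1}. \<bar>x t - y (r t)\<bar> \<le> e)}"
    by (rule bdd_belowI[of _ 0]) (force)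
qed

lemma J1_sup:
  assumes "\<forall>t\<in>{0..1}. \<bar>x t - y t\<bar> \<le> e" "0 \<le> e"
  shows "skorokhod_J1 x y \<le> e"
  using J1_le[OF id_time_change] assms by auto

lemma f_eq01:
  assumes f: "bdd_J1_continuous f" and x: "cadlag01 x" and y: "cadlag01 y"
    and eq: "\<forall>t\<in>{0..1}. x t = y t"
  shows "f y = f x"
proof (rule ccontr)
  assume ne: "f y \<noteq> f x"
  then have "\<bar>f y - f x\<bar> > 0" by simp
  then obtain d where d: "d > 0" "\<forall>z. cadlag01 z \<longrightarrow> skorokhod_J1 x z < d \<longrightarrow> \<bar>f z - f x\<bar> < \<bar>f y - f x\<bar>"
    using f x unfolding bdd_J1_continuous_def by blast
  have "skorokhod_J1 x y \<le> 0" using eq by (intro J1_sup) auto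
  with d y show False by force
qed


definition good_part :: "(real \<Rightarrow> real) \<Rightarrow> real \<Rightarrow> real \<Rightarrow> bool" where
  "good_part x e s \<longleftrightarrow> (\<exists>m (a::nat\<Rightarrow>real). a 0 = 0 \<and> a m = s \<and> strict_mono_on {0..m} a \<and>
     (\<forall>i<m. \<forall>u v. a i \<le> u \<longrightarrow> u < a (Suc i) \<longrightarrow> a i \<le> v \<longrightarrow> v < a (Suc i) \<longrightarrow> \<bar>x u - x v\<bar> \<le> e))"

lemma good_part_0: "good_part x e 0"
  unfolding good_part_def by (rule exI[of _ 0], rule exI[of _ "\<lambda>_. 0"]) (auto simp: strict_mono_on_def)

lemma good_part_ext:
  assumes g: "good_part x e s" and ss: "s < s'"
    and osc: "\<forall>u v. s \<le> u \<longrightarrow> u < s' \<longrightarrow> s \<le> v \<longrightarrow> v < s' \<longrightarrow> \<bar>x u - x v\<bar> \<le> e"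
  shows "good_part x e s'"
proof -
  obtain m a where a: "a 0 = 0" "a m = s" "strict_mono_on {0..m} a"
    and o: "\<forall>i<m. \<forall>u v. a i \<le> u \<longrightarrow> u < a (Suc i) \<longrightarrow> a i \<le> v \<longrightarrow> v < a (Suc i) \<longrightarrow> \<bar>x u - x v\<bar> \<le> e"
    using g unfolding good_part_def by blast
  define a' where "a' = a(Suc m := s')"
  have le: "a i \<le> s" if "i \<le> m" for i
  proof (cases "i = m")
    case False
    then have "a i < a m" using a(3) that by (auto simp: strict_mono_on_def)
    then show ?thesis using a(2) by simp
  qed (use a(2) in simp)
  have "strict_mono_on {0..Suc m} a'"
  proof (rule strict_mono_onI)
    fix i j assume ij: "i \<in> {0..Suc m}" "j \<in> {0..Suc m}" "i < j"
    show "a' i < a' j"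
    proof (cases "j = Suc m")
      case True
      then have "i \<le> m" using ij by auto
      then show ?thesis using True le[of i] ss by (auto simp: a'_def)
    next
      case False
      then show ?thesis using ij a(3) by (auto simp: a'_def strict_mono_on_def)
    qed
  qed
  moreover have "\<forall>i<Suc m. \<forall>u v. a' i \<le> u \<longrightarrow> u < a' (Suc i) \<longrightarrow> a' i \<le> v \<longrightarrow> v < a' (Suc i) \<longrightarrow> \<bar>x u - x v\<bar> \<le> e"
  proof (intro allI impI)
    fix i u v assume "i < Suc m" and h: "a' i \<le> u" "u < a' (Suc i)" "a' i \<le> v" "v < a' (Suc i)"
    show "\<bar>x u - x v\<bar> \<le> e"
    proof (cases "i = m")
      case True
      then show ?thesis using h osc a(2) by (auto simp: a'_def)
    next
      case False
      then have "i < m" using \<open>i < Suc m\<close> by auto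
      then show ?thesis using h o by (auto simp: a'_def)
    qed
  qed
  ultimately show ?thesis unfolding good_part_def
    by (intro exI[of _ "Suc m"] exI[of _ a']) (auto simp: a'_def a)
qed

lemma cadlag_partition:
  assumes x: "cadlag01 x" and e: "e > 0"
  shows "good_part x e 1"
proof -
  define S where "S = {s\<in>{0..1}. good_part x e s}"
  have S0: "0 \<in> S" unfolding S_def using good_part_0 by auto
  have bdd: "bdd_above S" unfolding S_def by (rule bdd_aboveI[of _ 1]) auto
  define \<tau> where "\<tau> = Sup S"
  have t0: "0 \<le> \<tau>" unfolding \<tau>_def using S0 bdd by (auto intro: cSup_upper)
  have t1: "\<tau> \<le> 1" unfolding \<tau>_def by (rule cSup_least) (use S0 in blast, auto simp: S_def)
  have tS: "\<tau> \<in> S"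
  proof (cases "\<tau> = 0")
    case True then show ?thesis using S0 by simp
  next
    case False
    then have tp: "\<tau> > 0" using t0 by simp
    obtain l where l: "(x \<longlongrightarrow> l) (at_left \<tau>)" using x tp t1 unfolding cadlag01_def by fastforce
    have "eventually (\<lambda>u. dist (x u) l < e/2) (at_left \<tau>)"
      using l e tendsto_iff[of x l "at_left \<tau>"] half_gt_zero[of e] by blast
    then obtain b where b: "b < \<tau>" "\<forall>u>b. u < \<tau> \<longrightarrow> dist (x u) l < e/2"
      using eventually_at_left[of 0 \<tau>] tp by auto
    obtain s where s: "s \<in> S" "b < s" using less_cSupD[of S b] S0 b(1) unfolding \<tau>_def by auto
    have st: "s \<le> \<tau>" using s bdd unfolding \<tau>_def by (auto intro: cSup_upper)
    show ?thesis
    proof (cases "s = \<tau>")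
      case True then show ?thesis using s by simp
    next
      case False
      then have "s < \<tau>" using st by simp
      moreover have "\<forall>u v. s \<le> u \<longrightarrow> u < \<tau> \<longrightarrow> s \<le> v \<longrightarrow> v < \<tau> \<longrightarrow> \<bar>x u - x v\<bar> \<le> e"
      proof (intro allI impI)
        fix u v assume "s \<le> u" "u < \<tau>" "s \<le> v" "v < \<tau>"
        then have "dist (x u) l < e/2" "dist (x v) l < e/2" using b s by auto
        then show "\<bar>x u - x v\<bar> \<le> e" unfolding dist_real_def by arith
      qed
      ultimately have "good_part x e \<tau>" using good_part_ext s(1) unfolding S_def by blast
      then show ?thesis using t0 t1 unfolding S_def by simp
    qed
  qed
  have "\<tau> = 1"
  proof (rule ccontr)
    assume "\<tau> \<noteq> 1"
    then have tl: "\<tau> < 1" using t1 by simp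
    have l: "(x \<longlongrightarrow> x \<tau>) (at_right \<tau>)" using x tl t0 unfolding cadlag01_def by auto
    have "eventually (\<lambda>u. dist (x u) (x \<tau>) < e/2) (at_right \<tau>)"
      using l e tendsto_iff[of x "x \<tau>" "at_right \<tau>"] half_gt_zero[of e] by blast
    then obtain b where b: "b > \<tau>" "\<forall>u>\<tau>. u < b \<longrightarrow> dist (x u) (x \<tau>) < e/2"
      using eventually_at_right[of \<tau> 1] tl by auto
    define s' where "s' = min b 1"
    have s': "\<tau> < s'" "s' \<le> 1" using b tl by (auto simp: s'_def)
    have close: "\<bar>x u - x \<tau>\<bar> \<le> e/2" if "\<tau> \<le> u" "u < s'" for u
    proof (cases "u = \<tau>")
      case False
      then have "u > \<tau>" "u < b" using that s'_def by auto
      then have "dist (x u) (x \<tau>) < e/2" using b by blast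
      then show ?thesis by (simp add: dist_real_def)
    qed (use e in simp)
    have "\<forall>u v. \<tau> \<le> u \<longrightarrow> u < s' \<longrightarrow> \<tau> \<le> v \<longrightarrow> v < s' \<longrightarrow> \<bar>x u - x v\<bar> \<le> e"
    proof (intro allI impI)
      fix u v assume "\<tau> \<le> u" "u < s'" "\<tau> \<le> v" "v < s'"
      then have "\<bar>x u - x \<tau>\<bar> \<le> e/2" "\<bar>x v - x \<tau>\<bar> \<le> e/2" using close by auto
      then show "\<bar>x u - x v\<bar> \<le> e" by arith
    qed
    then have "good_part x e s'" using good_part_ext tS s' unfolding S_def by blast
    then have "s' \<in> S" using s' t0 unfolding S_def by auto
    then have "s' \<le> \<tau>" using bdd unfolding \<tau>_def by (auto intro: cSup_upper)
    then show False using s' by simp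
  qed
  then show ?thesis using tS unfolding S_def by simp
qed


lemma smo_lt: "strict_mono_on {0..m} (a::nat\<Rightarrow>real) \<Longrightarrow> i < j \<Longrightarrow> j \<le> m \<Longrightarrow> a i < a j"
  by (auto simp: strict_mono_on_def)

lemma smo_le: "strict_mono_on {0..m} (a::nat\<Rightarrow>real) \<Longrightarrow> i \<le> j \<Longrightarrow> j \<le> m \<Longrightarrow> a i \<le> a j"
  by (cases "i = j") (auto simp: strict_mono_on_def intro: less_imp_le)

lemma cell_open:
  assumes a0: "a 0 = 0" and am: "a m = 1" and sm: "strict_mono_on {0..m} (a::nat\<Rightarrow>real)"
    and t: "0 \<le> t" "t < 1"
  shows "\<exists>i<m. a i \<le> t \<and> t < a (Suc i)"
proof -
  have m0: "m > 0" using a0 am by (cases m) auto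
  define I where "I = {i. i < m \<and> a i \<le> t}"
  have fin: "finite I" unfolding I_def by auto
  have ne: "0 \<in> I" using m0 a0 t unfolding I_def by auto
  define i where "i = Max I"
  have iI: "i \<in> I" unfolding i_def using fin ne by (auto intro: Max_in)
  have "t < a (Suc i)"
  proof (cases "Suc i < m")
    case True
    have "Suc i \<notin> I" using Max_ge[OF fin, of "Suc i"] unfolding i_def by auto
    then show ?thesis using True unfolding I_def by auto
  next
    case False
    then have "Suc i = m" using iI unfolding I_def by auto
    then show ?thesis using am t by simp
  qed
  then show ?thesis using iI unfolding I_def by auto
qed

lemma cell_closed:
  assumes a0: "a 0 = 0" and am: "a m = 1" and sm: "strict_mono_on {0..m} (a::nat\<Rightarrow>real)"
    and t: "0 \<le> t" "t \<le> 1"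
  shows "\<exists>i<m. a i \<le> t \<and> t \<le> a (Suc i)"
proof (cases "t < 1")
  case True then show ?thesis using cell_open[OF a0 am sm t(1)] by force
next
  case False
  have m0: "m > 0" using a0 am by (cases m) auto
  have "a (m - 1) \<le> 1" using smo_le[OF sm, of "m-1" m] am by simp
  then show ?thesis using False t m0 am by (intro exI[of _ "m - 1"]) auto
qed

definition clamp01 :: "real \<Rightarrow> real" where "clamp01 u = max 0 (min 1 u)"

definition pl :: "nat \<Rightarrow> (nat \<Rightarrow> real) \<Rightarrow> (nat \<Rightarrow> real) \<Rightarrow> real \<Rightarrow> real" where
  "pl m a b t = (\<Sum>i<m. (b (Suc i) - b i) * clamp01 ((t - a i) / (a (Suc i) - a i)))"

lemma pl_eval:
  assumes sm: "strict_mono_on {0..m} (a::nat\<Rightarrow>real)" and i0: "i0 < m"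
    and t: "a i0 \<le> t" "t \<le> a (Suc i0)"
  shows "pl m a b t = b i0 - b 0 + (b (Suc i0) - b i0) * ((t - a i0) / (a (Suc i0) - a i0))"
proof -
  define f where "f i = (b (Suc i) - b i) * clamp01 ((t - a i) / (a (Suc i) - a i))" for i
  have gap: "a i < a (Suc i)" if "i < m" for i using smo_lt[OF sm, of i "Suc i"] that by simp
  have split: "{..<m} = {..<Suc i0} \<union> {Suc i0..<m}" using i0 by auto
  have "pl m a b t = sum f {..<Suc i0} + sum f {Suc i0..<m}"
    unfolding pl_def f_def[symmetric] split by (subst sum.union_disjoint) auto
  also have "sum f {Suc i0..<m} = 0"
  proof (rule sum.neutral, clarify)
    fix i assume "i \<in> {Suc i0..<m}"
    then have "a (Suc i0) \<le> a i" "a i < a (Suc i)" using smo_le[OF sm, of "Suc i0" i] gap[of i] by auto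
    then have "(t - a i) / (a (Suc i) - a i) \<le> 0" using t by (intro divide_nonpos_pos) auto
    then show "f i = 0" unfolding f_def clamp01_def by simp
  qed
  also have "sum f {..<Suc i0} = sum f {..<i0} + f i0" by simp
  also have "sum f {..<i0} = (\<Sum>i<i0. b (Suc i) - b i)"
  proof (rule sum.cong, simp)
    fix i assume "i \<in> {..<i0}"
    then have "a (Suc i) \<le> a i0" "a i < a (Suc i)" using smo_le[OF sm, of "Suc i" i0] gap[of i] i0 by auto
    then have "(t - a i) / (a (Suc i) - a i) \<ge> 1" using t by (simp add: divide_simps)
    then show "f i = b (Suc i) - b i" unfolding f_def clamp01_def by simp
  qed
  also have "\<dots> = b i0 - b 0" by (rule sum_lessThan_telescope)
  also have "f i0 = (b (Suc i0) - b i0) * ((t - a i0) / (a (Suc i0) - a i0))"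
  proof -
    have "0 \<le> (t - a i0) / (a (Suc i0) - a i0)" "(t - a i0) / (a (Suc i0) - a i0) \<le> 1"
      using t gap[OF i0] by (auto simp: divide_simps)
    then show ?thesis unfolding f_def clamp01_def by simp
  qed
  finally show ?thesis by simp
qed


lemma time_change_exists:
  fixes a :: "nat \<Rightarrow> real" and n :: nat
  assumes a0: "a 0 = 0" and am: "a m = 1" and sm: "strict_mono_on {0..m} a" and n: "0 < n"
    and gapn: "\<forall>i<m. 1 \<le> real n * (a (Suc i) - a i)"
  defines "b \<equiv> \<lambda>i. real_of_int \<lceil>real n * a i\<rceil> / real n"
  shows "pl m a b \<in> time_changes01"
    and "\<forall>t\<in>{0..1}. \<bar>pl m a b t - t\<bar> \<le> 1 / real n"
    and "\<forall>t\<in>{0..1}. 0 \<le> pl m a b t \<and> pl m a b t \<le> 1"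
    and "\<forall>i<m. \<forall>t. a i \<le> t \<longrightarrow> t < a (Suc i) \<longrightarrow>
            a i \<le> real_of_int \<lfloor>real n * pl m a b t\<rfloor> / real n \<and>
            real_of_int \<lfloor>real n * pl m a b t\<rfloor> / real n < a (Suc i)"
proof -
  let ?r = "pl m a b"
  have npos: "real n > 0" using n by simp
  have m0: "m > 0" using a0 am by (cases m) auto
  have gap: "a i < a (Suc i)" if "i < m" for i using smo_lt[OF sm, of i "Suc i"] that by simp
  have b0: "b 0 = 0" unfolding b_def a0 by simp
  have bm: "b m = 1" unfolding b_def am using npos by simp
  have nb: "real n * b i = real_of_int \<lceil>real n * a i\<rceil>" for i unfolding b_def using npos by simp
  have ab: "a i \<le> b i" "b i < a i + 1 / real n" for i
  proof -
    have "real n * a i \<le> real n * b i" unfolding nb by simp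
    then show "a i \<le> b i" using npos by simp
    have "real n * b i < real n * a i + 1" unfolding nb by linarith
    then show "b i < a i + 1 / real n" using npos by (simp add: field_simps)
  qed
  have bgap: "b i < b (Suc i)" if "i < m" for i
  proof -
    have "real n * a i + 1 \<le> real n * a (Suc i)" using gapn that by (simp add: algebra_simps)
    then have "real n * b i < real n * b (Suc i)" unfolding nb by linarith
    then show ?thesis using npos by simp
  qed
  have bmono: "b i \<le> b j" if "i \<le> j" "j \<le> m" for i j
  proof -
    have "a i \<le> a j" using smo_le[OF sm that] .
    then have "real n * b i \<le> real n * b j" unfolding nb using npos by (simp add: ceiling_mono mult_left_mono)
    then show ?thesis using npos by simp
  qed
  define th where "th i t = (t - a i) / (a (Suc i) - a i)" for i t
  have ev: "?r t = b i + (b (Suc i) - b i) * th i t" if "i < m" "a i \<le> t" "t \<le> a (Suc i)" for i t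
    using pl_eval[OF sm that] b0 unfolding th_def by simp
  have th01: "0 \<le> th i t" "th i t \<le> 1" if "i < m" "a i \<le> t" "t \<le> a (Suc i)" for i t
    using that gap[OF that(1)] unfolding th_def by (auto simp: divide_simps)
  have th1: "th i t < 1" if "i < m" "a i \<le> t" "t < a (Suc i)" for i t
    using that gap[OF that(1)] unfolding th_def by (auto simp: divide_simps)
  have rrange: "b i \<le> ?r t \<and> ?r t \<le> b (Suc i)" if "i < m" "a i \<le> t" "t \<le> a (Suc i)" for i t
  proof -
    have "0 \<le> (b (Suc i) - b i) * th i t" using th01[OF that] bgap[OF that(1)] by simp
    moreover have "(b (Suc i) - b i) * th i t \<le> (b (Suc i) - b i) * 1"
      using th01[OF that] bgap[OF that(1)] by (intro mult_left_mono) auto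
    ultimately show ?thesis using ev[OF that] by simp
  qed
  have rlt: "?r t < b (Suc i)" if "i < m" "a i \<le> t" "t < a (Suc i)" for i t
  proof -
    have "(b (Suc i) - b i) * th i t < (b (Suc i) - b i) * 1"
      using th1[OF that] bgap[OF that(1)] by (intro mult_strict_left_mono) auto
    then show ?thesis using ev[OF that(1,2)] that by simp
  qed
  show range: "\<forall>t\<in>{0..1}. 0 \<le> ?r t \<and> ?r t \<le> 1"
  proof
    fix t :: real assume "t \<in> {0..1}"
    then obtain i where i: "i < m" "a i \<le> t" "t \<le> a (Suc i)" using cell_closed[OF a0 am sm] by force
    have "b 0 \<le> b i" "b (Suc i) \<le> b m" using bmono i by auto
    then show "0 \<le> ?r t \<and> ?r t \<le> 1" using rrange[OF i] b0 bm by auto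
  qed
  show "\<forall>t\<in>{0..1}. \<bar>?r t - t\<bar> \<le> 1 / real n"
  proof
    fix t :: real assume "t \<in> {0..1}"
    then obtain i where i: "i < m" "a i \<le> t" "t \<le> a (Suc i)" using cell_closed[OF a0 am sm] by force
    define \<theta> where "\<theta> = th i t"
    have teq: "t = a i + \<theta> * (a (Suc i) - a i)" unfolding \<theta>_def th_def using gap[OF i(1)] by simp
    have e1: "?r t = b i + (b (Suc i) - b i) * \<theta>" using ev[OF i] unfolding \<theta>_def by simp
    have "?r t - t = b i + (b (Suc i) - b i) * \<theta> - (a i + \<theta> * (a (Suc i) - a i))"
      using e1 teq by linarith
    also have "\<dots> = (1 - \<theta>) * (b i - a i) + \<theta> * (b (Suc i) - a (Suc i))" by (simp add: algebra_simps)
    finally have req: "?r t - t = (1 - \<theta>) * (b i - a i) + \<theta> * (b (Suc i) - a (Suc i))" .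
    have tt: "0 \<le> \<theta>" "\<theta> \<le> 1" using th01[OF i] unfolding \<theta>_def by auto
    have "0 \<le> (1 - \<theta>) * (b i - a i) + \<theta> * (b (Suc i) - a (Suc i))"
      using tt ab by (intro add_nonneg_nonneg mult_nonneg_nonneg) auto
    moreover have "(1 - \<theta>) * (b i - a i) + \<theta> * (b (Suc i) - a (Suc i)) \<le> (1 - \<theta>) * (1/real n) + \<theta> * (1/real n)"
      using tt ab[of i] ab[of "Suc i"] by (intro add_mono mult_left_mono) auto
    moreover have "(1 - \<theta>) * (1/real n) + \<theta> * (1/real n) = 1 / real n" by (metis add_diff_cancel_left' diff_add_cancel distrib_right mult_1)
    ultimately show "\<bar>?r t - t\<bar> \<le> 1 / real n" unfolding req by linarith
  qed
  show "\<forall>i<m. \<forall>t. a i \<le> t \<longrightarrow> t < a (Suc i) \<longrightarrow>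
            a i \<le> real_of_int \<lfloor>real n * ?r t\<rfloor> / real n \<and>
            real_of_int \<lfloor>real n * ?r t\<rfloor> / real n < a (Suc i)"
  proof (intro allI impI)
    fix i t assume i: "i < m" "a i \<le> t" "t < a (Suc i)"
    have r1: "b i \<le> ?r t" using rrange[of i t] i by auto
    have r2: "?r t < b (Suc i)" using rlt[OF i] .
    have "real n * b i \<le> real n * ?r t" using r1 npos by simp
    then have "\<lceil>real n * a i\<rceil> \<le> \<lfloor>real n * ?r t\<rfloor>" unfolding nb by (simp add: le_floor_iff)
    then have "real n * a i \<le> real_of_int \<lfloor>real n * ?r t\<rfloor>"
      by (meson le_of_int_ceiling of_int_le_iff order_trans)
    then show "a i \<le> real_of_int \<lfloor>real n * ?r t\<rfloor> / real n \<and>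
            real_of_int \<lfloor>real n * ?r t\<rfloor> / real n < a (Suc i)"
    proof -
      assume A: "real n * a i \<le> real_of_int \<lfloor>real n * ?r t\<rfloor>"
      have "real n * ?r t < real n * b (Suc i)" using r2 npos by simp
      then have "\<lfloor>real n * ?r t\<rfloor> < \<lceil>real n * a (Suc i)\<rceil>" unfolding nb by (simp add: floor_less_iff)
      then have "\<lfloor>real n * ?r t\<rfloor> \<le> \<lceil>real n * a (Suc i)\<rceil> - 1" by simp
      then have "real_of_int \<lfloor>real n * ?r t\<rfloor> < real n * a (Suc i)"
      proof -
        have "real_of_int \<lceil>real n * a (Suc i)\<rceil> - 1 < real n * a (Suc i)"
          using ceiling_correct[of "real n * a (Suc i)"] by simp
        moreover have "real_of_int \<lfloor>real n * ?r t\<rfloor> \<le> real_of_int \<lceil>real n * a (Suc i)\<rceil> - 1"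
          using \<open>\<lfloor>real n * ?r t\<rfloor> \<le> \<lceil>real n * a (Suc i)\<rceil> - 1\<close> by linarith
        ultimately show ?thesis by linarith
      qed
      with A show ?thesis using npos by (simp add: field_simps)
    qed
  qed
  have smr: "strict_mono_on {0..1} ?r"
  proof (rule strict_mono_onI)
    fix t t' :: real assume tt: "t \<in> {0..1}" "t' \<in> {0..1}" "t < t'"
    then obtain i where i: "i < m" "a i \<le> t" "t < a (Suc i)" using cell_open[OF a0 am sm, of t] by auto
    show "?r t < ?r t'"
    proof (cases "t' \<le> a (Suc i)")
      case True
      have "th i t < th i t'" unfolding th_def using tt gap[OF i(1)] by (intro divide_strict_right_mono) auto
      then have "(b (Suc i) - b i) * th i t < (b (Suc i) - b i) * th i t'"
        using bgap[OF i(1)] by (intro mult_strict_left_mono) auto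
      then show ?thesis using ev[of i t] ev[of i t'] i True tt by auto
    next
      case False
      obtain j where j: "j < m" "a j \<le> t'" "t' \<le> a (Suc j)" using cell_closed[OF a0 am sm, of t'] tt by auto
      have "Suc i \<le> j"
      proof (rule ccontr)
        assume "\<not> Suc i \<le> j"
        then have "Suc j \<le> Suc i" by simp
        then have "a (Suc j) \<le> a (Suc i)" using smo_le[OF sm, of "Suc j" "Suc i"] i by simp
        then show False using j False by simp
      qed
      then have "b (Suc i) \<le> b j" using bmono j by simp
      then show ?thesis using rlt[OF i] rrange[OF j] by simp
    qed
  qed
  have cont: "continuous_on {0..1} ?r"
    unfolding pl_def clamp01_def
    by (intro continuous_on_sum continuous_intros) (use gap in force)+
  have r0: "?r 0 = 0" using ev[of 0 0] m0 a0 gap[of 0] b0 unfolding th_def by simp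
  have r1: "?r 1 = 1"
  proof -
    have "a (m - 1) \<le> 1" using smo_le[OF sm, of "m-1" m] am by simp
    then have "?r 1 = b (m-1) + (b m - b (m-1)) * th (m-1) 1" using ev[of "m-1" 1] m0 am by simp
    also have "th (m-1) 1 = 1" unfolding th_def using gap[of "m-1"] m0 am by simp
    finally show ?thesis using bm m0 by simp
  qed
  show "?r \<in> time_changes01" unfolding time_changes01_def using smr cont r0 r1 by auto
qed


lemma ev_real_ge: "eventually (\<lambda>n::nat. K \<le> real n) sequentially"
  using filterlim_real_sequentially unfolding filterlim_at_top by auto

lemma disc_J1:
  fixes x :: "real \<Rightarrow> real" and c :: "nat \<Rightarrow> real"
  assumes x: "cadlag01 x" and c: "c \<longlonglongrightarrow> 1" and d: "d > 0"
  shows "eventually (\<lambda>n. skorokhod_J1 x (\<lambda>t. c n * x (real (min n (nat \<lfloor>real n * t\<rfloor>)) / real n)) < d) sequentially"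
proof -
  define e where "e = d / 2"
  have e: "e > 0" using d unfolding e_def by simp
  obtain m a where a0: "a 0 = 0" and am: "a m = 1" and sm: "strict_mono_on {0..m} a"
    and osc: "\<forall>i<m. \<forall>u v. a i \<le> u \<longrightarrow> u < a (Suc i) \<longrightarrow> a i \<le> v \<longrightarrow> v < a (Suc i) \<longrightarrow> \<bar>x u - x v\<bar> \<le> e/2"
    using cadlag_partition[OF x, of "e/2"] e unfolding good_part_def by auto
  have m0: "m > 0" using a0 am by (cases m) auto
  have gap: "a i < a (Suc i)" if "i < m" for i using smo_lt[OF sm, of i "Suc i"] that by simp
  have a01: "0 \<le> a i \<and> a i \<le> 1" if "i \<le> m" for i
    using smo_le[OF sm, of 0 i] smo_le[OF sm, of i m] that a0 am by auto
  define B where "B = (\<Sum>i\<le>m. \<bar>x (a i)\<bar>) + e/2"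
  have B0: "0 \<le> B" unfolding B_def using e by (auto intro: sum_nonneg)
  have xb: "\<bar>x s\<bar> \<le> B" if s0: "0 \<le> s" "s \<le> 1" for s
  proof -
    have le: "\<bar>x (a i)\<bar> \<le> (\<Sum>i\<le>m. \<bar>x (a i)\<bar>)" if "i \<le> m" for i
      using that by (intro member_le_sum) auto
    show ?thesis
    proof (cases "s < 1")
      case True
      then obtain i where i: "i < m" "a i \<le> s" "s < a (Suc i)" using cell_open[OF a0 am sm s0(1)] by auto
      have "\<bar>x s - x (a i)\<bar> \<le> e/2" using osc i gap[OF i(1)] by auto
      then show ?thesis using le[of i] i unfolding B_def by linarith
    next
      case False
      then have "s = a m" using s0 am by simp
      then show ?thesis using le[of m] e unfolding B_def by simp
    qed
  qed
  have E1: "eventually (\<lambda>n. \<forall>i\<in>{..<m}. 1 \<le> real n * (a (Suc i) - a i)) sequentially"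
  proof (rule eventually_ball_finite, simp, intro ballI)
    fix i assume "i \<in> {..<m}"
    then have g: "a (Suc i) - a i > 0" using gap by simp
    show "eventually (\<lambda>n. 1 \<le> real n * (a (Suc i) - a i)) sequentially"
      using ev_real_ge[of "1 / (a (Suc i) - a i)"]
      by eventually_elim (use g in \<open>simp add: field_simps\<close>)
  qed
  have E2: "eventually (\<lambda>n. 1 / e \<le> real n \<and> 1 \<le> real n) sequentially"
    using ev_real_ge[of "1/e"] ev_real_ge[of 1] by eventually_elim auto
  have E3: "eventually (\<lambda>n. \<bar>c n - 1\<bar> * B \<le> e/2) sequentially"
  proof -
    have "e / (2 * (B + 1)) > 0" using e B0 by simp
    then have "eventually (\<lambda>n. dist (c n) 1 < e / (2 * (B + 1))) sequentially"
      using c tendsto_iff by blast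
    then show ?thesis
    proof eventually_elim
      case (elim n)
      then have h: "\<bar>c n - 1\<bar> \<le> e / (2 * (B + 1))" by (simp add: dist_real_def)
      have "\<bar>c n - 1\<bar> * B \<le> e / (2 * (B + 1)) * B" using h B0 by (intro mult_right_mono) auto
      also have "\<dots> \<le> e / (2 * (B + 1)) * (B + 1)" using e B0 by (intro mult_left_mono) auto
      also have "\<dots> = e / 2" using B0 by (simp add: field_simps)
      finally show ?case .
    qed
  qed
  show ?thesis
    using E1 E2 E3
  proof eventually_elim
    case (elim n)
    have npos: "0 < n" using elim(2) by simp
    have nr: "0 < real n" using npos by simp
    have gapn: "\<forall>i<m. 1 \<le> real n * (a (Suc i) - a i)" using elim(1) by auto
    define b where "b = (\<lambda>i. real_of_int \<lceil>real n * a i\<rceil> / real n)"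
    note tc = time_change_exists[OF a0 am sm npos gapn, folded b_def]
    define r where "r = pl m a b"
    have ne: "1 / real n \<le> e" using elim(2) e nr by (simp add: field_simps)
    let ?y = "\<lambda>t. c n * x (real (min n (nat \<lfloor>real n * t\<rfloor>)) / real n)"
    have r1: "r 1 = 1" using tc(1) unfolding r_def time_changes01_def by simp
    have main: "\<bar>x t - ?y (r t)\<bar> \<le> e" if t: "t \<in> {0..1}" for t
    proof -
      have rt: "0 \<le> r t" "r t \<le> 1" using tc(3) t unfolding r_def by auto
      have fl: "\<lfloor>real n * r t\<rfloor> \<le> int n"
      proof -
        have "real n * r t \<le> real n" using rt nr by (simp add: mult_left_le)
        then show ?thesis by (simp add: floor_le_iff)
      qed
      have fl0: "0 \<le> \<lfloor>real n * r t\<rfloor>" using rt nr by simp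
      have yeq: "?y (r t) = c n * x (real_of_int \<lfloor>real n * r t\<rfloor> / real n)"
      proof -
        have "min n (nat \<lfloor>real n * r t\<rfloor>) = nat \<lfloor>real n * r t\<rfloor>" using fl by simp
        moreover have "real (nat \<lfloor>real n * r t\<rfloor>) = real_of_int \<lfloor>real n * r t\<rfloor>" using fl0 by simp
        ultimately show ?thesis by simp
      qed
      define s where "s = real_of_int \<lfloor>real n * r t\<rfloor> / real n"
      have s01: "0 \<le> s" "s \<le> 1" unfolding s_def using fl0 fl nr by (auto simp: divide_simps)
      have xs: "\<bar>x t - x s\<bar> \<le> e/2"
      proof (cases "t < 1")
        case True
        then obtain i where i: "i < m" "a i \<le> t" "t < a (Suc i)" using cell_open[OF a0 am sm] t by auto
        have "a i \<le> s \<and> s < a (Suc i)" using tc(4) i unfolding r_def s_def by blast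
        then show ?thesis using osc i by blast
      next
        case False
        then have "t = 1" using t by simp
        then have "s = 1" unfolding s_def using r1 nr by simp
        then show ?thesis using \<open>t = 1\<close> e by simp
      qed
      have "\<bar>x t - c n * x s\<bar> \<le> \<bar>x t - x s\<bar> + \<bar>c n - 1\<bar> * \<bar>x s\<bar>"
      proof -
        have "x t - c n * x s = (x t - x s) - (c n - 1) * x s" by (simp add: algebra_simps)
        then show ?thesis by (metis abs_mult abs_triangle_ineq4)
      qed
      also have "\<bar>c n - 1\<bar> * \<bar>x s\<bar> \<le> \<bar>c n - 1\<bar> * B" using xb[OF s01] by (intro mult_left_mono) auto
      finally show ?thesis using xs elim(3) yeq unfolding s_def by linarith
    qed
    have "skorokhod_J1 x ?y \<le> e"
      by (rule J1_le[of r]) (use tc(1,2) ne main in \<open>auto simp: r_def\<close>)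
    then show ?case using e unfolding e_def by simp
  qed
qed


definition Kset :: "real \<Rightarrow> nat \<Rightarrow> nat set" where
  "Kset \<alpha> n = {k::nat. log 2 (real n) / (2 * \<alpha>) < real k \<and> real k \<le> log 2 (real n) / \<alpha>}"

definition Hs :: "real \<Rightarrow> nat \<Rightarrow> real" where
  "Hs \<alpha> n = (\<Sum>k\<in>Kset \<alpha> n. 2 / real k)"

lemma le_nat_floor_iff: "0 \<le> x \<Longrightarrow> real k \<le> x \<longleftrightarrow> k \<le> nat \<lfloor>x\<rfloor>"
  by (metis le_nat_floor le_nat_iff le_floor_iff floor_less_zero not_le of_int_of_nat_eq)

lemma Kset_eq:
  assumes "0 \<le> A" "A = log 2 (real n) / \<alpha>" "\<alpha> > 0"
  shows "Kset \<alpha> n = {nat \<lfloor>A/2\<rfloor> <.. nat \<lfloor>A\<rfloor>}"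
proof -
  have h: "log 2 (real n) / (2 * \<alpha>) = A / 2" using assms by simp
  have iff: "(A/2 < real k \<and> real k \<le> A) \<longleftrightarrow> (nat \<lfloor>A/2\<rfloor> < k \<and> k \<le> nat \<lfloor>A\<rfloor>)" for k
  proof -
    have 1: "real k \<le> A \<longleftrightarrow> k \<le> nat \<lfloor>A\<rfloor>"
      using assms(1) le_nat_floor_iff by blast
    have 2: "A/2 < real k \<longleftrightarrow> nat \<lfloor>A/2\<rfloor> < k"
    proof -
      have "real k \<le> A/2 \<longleftrightarrow> k \<le> nat \<lfloor>A/2\<rfloor>"
        using assms(1) le_nat_floor_iff[of "A/2"] by simp
      then show ?thesis by linarith
    qed
    show ?thesis using 1 2 by blast
  qed
  show ?thesis unfolding Kset_def h assms(2)[symmetric]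
    by (rule set_eqI) (simp only: mem_Collect_eq greaterThanAtMost_iff iff)
qed

lemma sum_harm_diff:
  assumes "v \<le> u"
  shows "(\<Sum>k\<in>{v<..u}. 1 / real k) = harm u - harm v"
proof -
  have "{1..u} = {1..v} \<union> {v<..u}" using assms by auto
  then have "harm u = (\<Sum>k\<in>{1..v}. inverse (real k)) + (\<Sum>k\<in>{v<..u}. inverse (real k))"
    unfolding harm_def by (simp add: sum.union_disjoint ivl_disj_int)
  then show ?thesis unfolding harm_def by (simp add: divide_inverse)
qed

lemma Hs_lim:
  assumes a: "1 \<le> \<alpha>"
  shows "Hs \<alpha> \<longlonglongrightarrow> 2 * ln 2"
proof -
  have ap: "\<alpha> > 0" using a by simp
  define A where "A n = log 2 (real n) / \<alpha>" for n :: nat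
  have lg: "filterlim (\<lambda>n::nat. log 2 (real n)) at_top sequentially"
    by real_asymp
  have Atop: "filterlim A at_top sequentially"
  proof -
    have "filterlim (\<lambda>n. (1/\<alpha>) * log 2 (real n)) at_top sequentially"
      by (rule filterlim_tendsto_pos_mult_at_top[OF tendsto_const _ lg]) (use ap in simp)
    then show ?thesis unfolding A_def by (simp add: field_simps)
  qed
  define u where "u n = nat \<lfloor>A n\<rfloor>" for n
  define v where "v n = nat \<lfloor>A n / 2\<rfloor>" for n
  have evA: "eventually (\<lambda>n. Z \<le> A n) sequentially" for Z using Atop unfolding filterlim_at_top by auto
  have bu: "A n - 1 < real (u n) \<and> real (u n) \<le> A n" if "0 \<le> A n" for n
    unfolding u_def using that by (simp add: of_nat_nat)
  have bv: "A n / 2 - 1 < real (v n) \<and> real (v n) \<le> A n / 2" if "0 \<le> A n" for n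
    unfolding v_def using that by (simp add: of_nat_nat) linarith
  have utop: "filterlim u at_top sequentially"
    unfolding filterlim_at_top
  proof
    fix Z :: nat
    show "eventually (\<lambda>n. Z \<le> u n) sequentially"
      using evA[of "real Z + 1"]
    proof eventually_elim
      case (elim n)
      then have "0 \<le> A n" by linarith
      then have "A n - 1 < real (u n)" using bu by blast
      then have "real Z < real (u n)" using elim by linarith
      then show ?case by simp
    qed
  qed
  have vtop: "filterlim v at_top sequentially"
    unfolding filterlim_at_top
  proof
    fix Z :: nat
    show "eventually (\<lambda>n. Z \<le> v n) sequentially"
      using evA[of "2 * real Z + 2"]
    proof eventually_elim
      case (elim n)
      then have "0 \<le> A n" by linarith
      then have "A n / 2 - 1 < real (v n)" using bv by blast
      then have "real Z < real (v n)" using elim by linarith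
      then show ?case by simp
    qed
  qed
  have ratio: "(\<lambda>n. real (u n) / real (v n)) \<longlonglongrightarrow> 2"
  proof (rule tendsto_sandwich)
    have g1: "((\<lambda>y::real. (y - 1) / (y / 2)) \<longlongrightarrow> 2) at_top" by real_asymp
    have g2: "((\<lambda>y::real. y / (y / 2 - 1)) \<longlongrightarrow> 2) at_top" by real_asymp
    show "((\<lambda>n. (A n - 1) / (A n / 2)) \<longlongrightarrow> 2) sequentially"
      using filterlim_compose[OF g1 Atop] by simp
    show "((\<lambda>n. A n / (A n / 2 - 1)) \<longlongrightarrow> 2) sequentially"
      using filterlim_compose[OF g2 Atop] by simp
    show "eventually (\<lambda>n. (A n - 1) / (A n / 2) \<le> real (u n) / real (v n)) sequentially"
      using evA[of 4]
    proof eventually_elim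
      case (elim n)
      have p: "0 < real (v n)" using bv[of n] elim by auto
      have "(A n - 1) / (A n / 2) \<le> real (u n) / (A n / 2)"
        using bu[of n] elim by (intro divide_right_mono) auto
      also have "\<dots> \<le> real (u n) / real (v n)"
        using bv[of n] elim p by (intro divide_left_mono) auto
      finally show ?case .
    qed
    show "eventually (\<lambda>n. real (u n) / real (v n) \<le> A n / (A n / 2 - 1)) sequentially"
      using evA[of 4]
    proof eventually_elim
      case (elim n)
      have p: "0 < real (v n)" using bv[of n] elim by auto
      have "real (u n) / real (v n) \<le> A n / real (v n)"
        using bu[of n] elim p by (intro divide_right_mono) auto
      also have "\<dots> \<le> A n / (A n / 2 - 1)"
        using bv[of n] elim p by (intro divide_left_mono) auto
      finally show ?case .
    qed
  qed
  have lim0: "(\<lambda>n. 2 * ((harm (u n) - ln (real (u n))) - (harm (v n) - ln (real (v n))) + ln (real (u n) / real (v n))))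
     \<longlonglongrightarrow> 2 * ((euler_mascheroni - euler_mascheroni) + ln 2)"
    by (intro tendsto_intros filterlim_compose[OF euler_mascheroni_LIMSEQ utop]
        filterlim_compose[OF euler_mascheroni_LIMSEQ vtop] ratio) auto
  have lim: "(\<lambda>n. 2 * ((harm (u n) - ln (real (u n))) - (harm (v n) - ln (real (v n))) + ln (real (u n) / real (v n))))
     \<longlonglongrightarrow> 2 * ln 2" using lim0 by simp
  show ?thesis
  proof (rule Lim_transform_eventually[OF lim])
    show "eventually (\<lambda>n. 2 * ((harm (u n) - ln (real (u n))) - (harm (v n) - ln (real (v n))) + ln (real (u n) / real (v n))) = Hs \<alpha> n) sequentially"
      using evA[of 4]
    proof eventually_elim
      case (elim n)
      have p: "0 < real (v n)" using bv[of n] elim by auto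
      have vu: "v n \<le> u n" using bv[of n] bu[of n] elim by auto
      have pu: "0 < real (u n)" using p vu by linarith
      have "Hs \<alpha> n = (\<Sum>k\<in>{v n<..u n}. 2 / real k)"
        unfolding Hs_def u_def v_def by (subst Kset_eq[of "A n"]) (use elim ap A_def in auto)
      also have "\<dots> = 2 * (\<Sum>k\<in>{v n<..u n}. 1 / real k)" by (simp add: sum_distrib_left)
      also have "\<dots> = 2 * (harm (u n) - harm (v n))" using sum_harm_diff[OF vu] by simp
      finally show ?case using p pu by (simp add: ln_div)
    qed
  qed
qed


lemma cadlag_floor: "cadlag01 (\<lambda>t. F \<lfloor>real n * t\<rfloor>)"
proof (cases "n = 0")
  case True then show ?thesis unfolding cadlag01_def by auto
next
  case False
  then have np: "real n > 0" by simp
  have right: "((\<lambda>t. F \<lfloor>real n * t\<rfloor>) \<longlongrightarrow> F \<lfloor>real n * t\<rfloor>) (at_right t)" for t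
  proof (rule tendsto_eventually)
    define b where "b = (real_of_int \<lfloor>real n * t\<rfloor> + 1) / real n"
    have tb: "t < b" unfolding b_def using np by (simp add: field_simps) linarith
    have "\<forall>s>t. s < b \<longrightarrow> F \<lfloor>real n * s\<rfloor> = F \<lfloor>real n * t\<rfloor>"
    proof (intro allI impI)
      fix s assume s: "t < s" "s < b"
      have "real n * t \<le> real n * s" using s np by simp
      moreover have "real n * s < real_of_int \<lfloor>real n * t\<rfloor> + 1" using s np unfolding b_def by (simp add: field_simps)
      ultimately have "\<lfloor>real n * s\<rfloor> = \<lfloor>real n * t\<rfloor>"
        by (intro floor_unique) (linarith, simp)
      then show "F \<lfloor>real n * s\<rfloor> = F \<lfloor>real n * t\<rfloor>" by simp
    qed
    then show "eventually (\<lambda>s. F \<lfloor>real n * s\<rfloor> = F \<lfloor>real n * t\<rfloor>) (at_right t)"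
      using eventually_at_right[of t b] tb by blast
  qed
  have left: "((\<lambda>t. F \<lfloor>real n * t\<rfloor>) \<longlongrightarrow> F (\<lceil>real n * t\<rceil> - 1)) (at_left t)" for t
  proof (rule tendsto_eventually)
    define b where "b = (real_of_int \<lceil>real n * t\<rceil> - 1) / real n"
    have tb: "b < t" unfolding b_def using np by (simp add: field_simps) linarith
    have "\<forall>s>b. s < t \<longrightarrow> F \<lfloor>real n * s\<rfloor> = F (\<lceil>real n * t\<rceil> - 1)"
    proof (intro allI impI)
      fix s assume s: "b < s" "s < t"
      have "real n * s < real n * t" using s np by simp
      moreover have "real_of_int \<lceil>real n * t\<rceil> - 1 < real n * s" using s np unfolding b_def by (simp add: field_simps)
      ultimately have "\<lfloor>real n * s\<rfloor> = \<lceil>real n * t\<rceil> - 1"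
        by (intro floor_unique) (simp, linarith)
      then show "F \<lfloor>real n * s\<rfloor> = F (\<lceil>real n * t\<rceil> - 1)" by simp
    qed
    then show "eventually (\<lambda>s. F \<lfloor>real n * s\<rfloor> = F (\<lceil>real n * t\<rceil> - 1)) (at_left t)"
      using eventually_at_left[of b t] tb by blast
  qed
  show ?thesis unfolding cadlag01_def using right left by blast
qed

definition spath :: "nat \<Rightarrow> (nat \<Rightarrow> real) \<Rightarrow> real \<Rightarrow> real" where
  "spath n y t = (\<Sum>j=1..min n (nat \<lfloor>real n * t\<rfloor>). y j)"

lemma cadlag_spath: "cadlag01 (spath n y)"
  unfolding spath_def using cadlag_floor[of "\<lambda>z. \<Sum>j=1..min n (nat z). y j" n] by simp

lemma spath_ext: "spath n (\<lambda>j. if j \<in> {1..n} then y j else 0) = spath n y"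
  unfolding spath_def by (intro ext sum.cong) auto

lemma path_diff_bound: "\<bar>spath n y t - spath n z t\<bar> \<le> (\<Sum>j=1..n. \<bar>y j - z j\<bar>)"
proof -
  have "\<bar>spath n y t - spath n z t\<bar> = \<bar>\<Sum>j=1..min n (nat \<lfloor>real n * t\<rfloor>). y j - z j\<bar>"
    unfolding spath_def by (simp add: sum_subtractf)
  also have "\<dots> \<le> (\<Sum>j=1..min n (nat \<lfloor>real n * t\<rfloor>). \<bar>y j - z j\<bar>)" by (rule sum_abs)
  also have "\<dots> \<le> (\<Sum>j=1..n. \<bar>y j - z j\<bar>)" by (intro sum_mono2) auto
  finally show ?thesis .
qed

lemma G_continuous:
  assumes f: "bdd_J1_continuous f"
  shows "continuous_on UNIV (\<lambda>y::nat \<Rightarrow> real. f (spath n y))"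
  unfolding continuous_on_sequentially
proof (intro allI ballI impI, elim conjE)
  fix ys :: "nat \<Rightarrow> nat \<Rightarrow> real" and y
  assume lim: "ys \<longlonglongrightarrow> y"
  have coord: "(\<lambda>m. ys m j) \<longlonglongrightarrow> y j" for j
  proof -
    have "isCont (\<lambda>x::nat\<Rightarrow>real. x j) y"
      using continuous_on_product_coordinates[of j] continuous_on_eq_continuous_at[of UNIV "\<lambda>x::nat\<Rightarrow>real. x j"] by simp
    then show ?thesis using lim by (rule isCont_tendsto_compose)
  qed
  have S: "(\<lambda>m. \<Sum>j=1..n. \<bar>ys m j - y j\<bar>) \<longlonglongrightarrow> (\<Sum>j=1..n. \<bar>y j - y j\<bar>)"
    by (intro tendsto_intros coord)
  show "((\<lambda>y. f (spath n y)) \<circ> ys) \<longlonglongrightarrow> f (spath n y)"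
    unfolding tendsto_iff
  proof (intro allI impI)
    fix e :: real assume e: "e > 0"
    obtain d where d: "d > 0" "\<forall>z. cadlag01 z \<longrightarrow> skorokhod_J1 (spath n y) z < d \<longrightarrow> \<bar>f z - f (spath n y)\<bar> < e"
      using f cadlag_spath[of n y] e unfolding bdd_J1_continuous_def by blast
    have "eventually (\<lambda>m. dist (\<Sum>j=1..n. \<bar>ys m j - y j\<bar>) 0 < d) sequentially"
      using S d(1) unfolding tendsto_iff by simp
    then show "eventually (\<lambda>m. dist (((\<lambda>y. f (spath n y)) \<circ> ys) m) (f (spath n y)) < e) sequentially"
    proof eventually_elim
      case (elim m)
      have "skorokhod_J1 (spath n y) (spath n (ys m)) \<le> (\<Sum>j=1..n. \<bar>ys m j - y j\<bar>)"
      proof (rule J1_sup)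
        show "\<forall>t\<in>{0..1}. \<bar>spath n y t - spath n (ys m) t\<bar> \<le> (\<Sum>j=1..n. \<bar>ys m j - y j\<bar>)"
          using path_diff_bound[of n y t "ys m" for t] by (simp add: abs_minus_commute)
      qed (auto intro: sum_nonneg)
      then have "skorokhod_J1 (spath n y) (spath n (ys m)) < d" using elim by (simp add: dist_real_def)
      then show ?case using d(2) cadlag_spath[of n "ys m"] by (simp add: dist_real_def)
    qed
  qed
qed

lemma G_measurable:
  assumes f: "bdd_J1_continuous f"
  shows "(\<lambda>y::nat \<Rightarrow> real. f (spath n y)) \<in> borel_measurable borel"
  by (rule borel_measurable_continuous_onI[OF G_continuous[OF f]])


lemma stable_cf_beta0:
  assumes "\<alpha> > 0" "\<sigma> \<ge> 0"
  shows "stable_cf \<alpha> \<sigma> 0 0 \<theta> = exp (- complex_of_real (\<sigma> powr \<alpha> * \<bar>\<theta>\<bar> powr \<alpha>))"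
  using assms unfolding stable_cf_def by (cases "\<alpha> = 1") (auto simp: powr_one)

lemma stable_cf_pair:
  assumes "\<alpha> > 0" "\<sigma> \<ge> 0"
  shows "stable_cf \<alpha> \<sigma> 1 0 \<theta> * stable_cf \<alpha> \<sigma> 1 0 (-\<theta>) = exp (- complex_of_real (2 * \<sigma> powr \<alpha> * \<bar>\<theta>\<bar> powr \<alpha>))"
proof (cases "\<alpha> = 1")
  case True
  have "stable_cf \<alpha> \<sigma> 1 0 \<theta> * stable_cf \<alpha> \<sigma> 1 0 (-\<theta>) =
    exp ((- complex_of_real (\<sigma> * \<bar>\<theta>\<bar>) * (1 + \<i> * complex_of_real ((2 / pi) * sgn \<theta> * ln \<bar>\<theta>\<bar>)))
       + (- complex_of_real (\<sigma> * \<bar>\<theta>\<bar>) * (1 - \<i> * complex_of_real ((2 / pi) * sgn \<theta> * ln \<bar>\<theta>\<bar>))))"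
    unfolding stable_cf_def exp_add using True by (simp add: sgn_minus)
  also have "\<dots> = exp (- complex_of_real (2 * \<sigma> * \<bar>\<theta>\<bar>))"
    by (rule arg_cong[where f = exp]) (simp add: algebra_simps)
  finally show ?thesis using True assms by (simp add: powr_one)
next
  case False
  have "stable_cf \<alpha> \<sigma> 1 0 \<theta> * stable_cf \<alpha> \<sigma> 1 0 (-\<theta>) =
    exp ((- complex_of_real (\<sigma> powr \<alpha> * \<bar>\<theta>\<bar> powr \<alpha>) * (1 - \<i> * complex_of_real (sgn \<theta> * tan (pi * \<alpha> / 2))))
       + (- complex_of_real (\<sigma> powr \<alpha> * \<bar>\<theta>\<bar> powr \<alpha>) * (1 + \<i> * complex_of_real (sgn \<theta> * tan (pi * \<alpha> / 2)))))"
    unfolding stable_cf_def exp_add using False by (simp add: sgn_minus)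
  also have "\<dots> = exp (- complex_of_real (2 * \<sigma> powr \<alpha> * \<bar>\<theta>\<bar> powr \<alpha>))"
    by (rule arg_cong[where f = exp]) (simp add: algebra_simps)
  finally show ?thesis .
qed

lemma (in prob_space) char_distr_scale:
  assumes X: "X \<in> borel_measurable M"
  shows "char (distr M borel (\<lambda>\<omega>. a * X \<omega>)) t = char (distr M borel X) (a * t)"
proof -
  have m: "(\<lambda>\<omega>. a * X \<omega>) \<in> borel_measurable M" using X by measurable
  show ?thesis unfolding char_def
    by (simp add: integral_distr[OF m] integral_distr[OF X] mult.assoc mult.commute mult.left_commute)
qed


definition Yv :: "real \<Rightarrow> (nat \<Rightarrow> nat \<Rightarrow> 'a \<Rightarrow> real) \<Rightarrow> nat \<Rightarrow> nat \<Rightarrow> 'a \<Rightarrow> real" where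
  "Yv \<alpha> X n j \<omega> = real n powr (- 1 / \<alpha>) * (\<Sum>k\<in>Kset \<alpha> n. X k j \<omega> - X k (j + 4 ^ (k^2)) \<omega>)"

lemma Kset_pos: "\<alpha> > 0 \<Longrightarrow> k \<in> Kset \<alpha> n \<Longrightarrow> 1 \<le> k"
proof (rule ccontr)
  assume a: "\<alpha> > 0" "k \<in> Kset \<alpha> n" "\<not> 1 \<le> k"
  then have "k = 0" by simp
  then have "log 2 (real n) / (2 * \<alpha>) < 0" "0 \<le> log 2 (real n) / \<alpha>" using a(2) unfolding Kset_def by auto
  moreover have "log 2 (real n) / (2 * \<alpha>) = (log 2 (real n) / \<alpha>) / 2" by simp
  ultimately show False by linarith
qed

lemma Kset_finite: "finite (Kset \<alpha> n)"
proof -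
  have "Kset \<alpha> n \<subseteq> {..nat \<lceil>log 2 (real n) / \<alpha>\<rceil>}"
  proof
    fix k assume "k \<in> Kset \<alpha> n"
    then have "real k \<le> log 2 (real n) / \<alpha>" unfolding Kset_def by auto
    also have "\<dots> \<le> real_of_int \<lceil>log 2 (real n) / \<alpha>\<rceil>" by (rule le_of_int_ceiling)
    finally have "int k \<le> \<lceil>log 2 (real n) / \<alpha>\<rceil>" by linarith
    then show "k \<in> {..nat \<lceil>log 2 (real n) / \<alpha>\<rceil>}" by auto
  qed
  then show ?thesis by (rule finite_subset) simp
qed

lemma tri_meas: "triangular_array M X \<alpha> \<Longrightarrow> 1 \<le> k \<Longrightarrow> 1 \<le> m \<Longrightarrow> X k m \<in> borel_measurable M"
  unfolding triangular_array_def has_stable_law_def by blast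

lemma Yv_meas:
  assumes tri: "triangular_array M X \<alpha>" and a: "\<alpha> > 0" and j: "1 \<le> j"
  shows "Yv \<alpha> X n j \<in> borel_measurable M"
proof -
  have "\<And>k. k \<in> Kset \<alpha> n \<Longrightarrow> (\<lambda>\<omega>. X k j \<omega> - X k (j + 4 ^ (k^2)) \<omega>) \<in> borel_measurable M"
    using tri_meas[OF tri] Kset_pos[OF a] j by (intro borel_measurable_diff) auto
  then show ?thesis unfolding Yv_def[abs_def]
    by (intro borel_measurable_times borel_measurable_const borel_measurable_sum) auto
qed


lemma powr_inv_alpha: "0 \<le> (x::real) \<Longrightarrow> \<alpha> \<noteq> 0 \<Longrightarrow> (x powr (- 1 / \<alpha>)) powr \<alpha> = (if x = 0 then 0 else 1 / x)"
proof (cases "x = 0")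
  case False
  assume x: "0 \<le> x" "\<alpha> \<noteq> 0"
  have "(x powr (- 1 / \<alpha>)) powr \<alpha> = x powr (- 1 / \<alpha> * \<alpha>)" by (rule powr_powr)
  also have "- 1 / \<alpha> * \<alpha> = - 1" using x by simp
  also have "x powr (- 1) = 1 / x" using x False by (simp add: powr_minus_divide)
  finally show ?thesis using False by simp
qed simp

lemma Yv_char:
  assumes tri: "triangular_array M X \<alpha>" and a: "1 \<le> \<alpha>" and n: "1 \<le> n" and j: "1 \<le> j"
  shows "char (distr M borel (Yv \<alpha> X n j)) \<theta> = exp (- complex_of_real (Hs \<alpha> n * \<bar>\<theta>\<bar> powr \<alpha> / real n))"
proof -
  interpret prob_space M using tri unfolding triangular_array_def by simp
  have ap: "\<alpha> > 0" using a by simp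
  define K where "K = Kset \<alpha> n"
  have Kf: "finite K" unfolding K_def by (rule Kset_finite)
  have K1: "\<And>k. k \<in> K \<Longrightarrow> 1 \<le> k" unfolding K_def using Kset_pos[OF ap] by blast
  define c where "c = real n powr (- 1 / \<alpha>)"
  have c0: "c > 0" unfolding c_def using n by simp
  define d where "d k = (4::nat) ^ (k^2)" for k
  have d1: "1 \<le> d k" for k unfolding d_def by simp
  define A where "A = (\<lambda>k. (k, j)) ` K"
  define B where "B = (\<lambda>k. (k, j + d k)) ` K"
  define Q where "Q = A \<union> B"
  define s where "s p = (if snd p = j then c else - c)" for p :: "nat \<times> nat"
  define Z where "Z p \<omega> = s p * (case p of (k, m) \<Rightarrow> X k m) \<omega>" for p \<omega>
  have AB: "A \<inter> B = {}"
  proof -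
    { fix k k' assume "(k, j) = (k', j + d k')" then have False using d1[of k'] by simp }
    then show ?thesis unfolding A_def B_def by blast
  qed
  have finQ: "finite A" "finite B" using Kf unfolding A_def B_def by auto
  have injA: "inj_on (\<lambda>k. (k, j)) K" by (auto simp: inj_on_def)
  have injB: "inj_on (\<lambda>k. (k, j + d k)) K" by (auto simp: inj_on_def)
  have sB: "s (k, j + d k) = - c" for k unfolding s_def using d1[of k] by simp
  have sumZ: "Yv \<alpha> X n j = (\<lambda>\<omega>. \<Sum>p\<in>Q. Z p \<omega>)"
  proof
    fix \<omega>
    have "(\<Sum>p\<in>Q. Z p \<omega>) = (\<Sum>p\<in>A. Z p \<omega>) + (\<Sum>p\<in>B. Z p \<omega>)"
      unfolding Q_def by (rule sum.union_disjoint[OF finQ AB])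
    also have "(\<Sum>p\<in>A. Z p \<omega>) = (\<Sum>k\<in>K. c * X k j \<omega>)"
      unfolding A_def by (subst sum.reindex[OF injA]) (simp add: Z_def s_def)
    also have "(\<Sum>p\<in>B. Z p \<omega>) = (\<Sum>k\<in>K. - c * X k (j + d k) \<omega>)"
      unfolding B_def by (subst sum.reindex[OF injB]) (simp add: Z_def sB)
    finally show "Yv \<alpha> X n j \<omega> = (\<Sum>p\<in>Q. Z p \<omega>)"
      unfolding Yv_def K_def[symmetric] c_def[symmetric] d_def[symmetric]
      by (simp add: sum_distrib_left sum_subtractf algebra_simps sum_negf)
  qed
  have QI: "Q \<subseteq> {(k, m). 1 \<le> k \<and> 1 \<le> m}" unfolding Q_def A_def B_def using K1 j by auto
  have ind0: "indep_vars (\<lambda>_. borel) (\<lambda>(k, m). X k m) {(k, m). 1 \<le> k \<and> 1 \<le> m}"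
    using tri unfolding triangular_array_def by simp
  have indQ: "indep_vars (\<lambda>_. borel) Z Q"
    unfolding Z_def
    by (rule indep_vars_compose2[OF indep_vars_subset[OF ind0 QI], where Y = "\<lambda>p x. s p * x"]) simp
  have law: "has_stable_law M (X k m) \<alpha> (real k powr (- 1 / \<alpha>)) 1 0" if "1 \<le> k" "1 \<le> m" for k m
    using tri that unfolding triangular_array_def by blast
  define cf where "cf k x = stable_cf \<alpha> (real k powr (- 1 / \<alpha>)) 1 0 x" for k x
  have charZ: "char (distr M borel (Z p)) \<theta> = cf (fst p) (s p * \<theta>)" if "p \<in> Q" for p
  proof -
    obtain k m where p: "p = (k, m)" by (cases p)
    have km: "1 \<le> k" "1 \<le> m" using QI that p by auto
    have Xm: "X k m \<in> borel_measurable M" using law[OF km] unfolding has_stable_law_def by simp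
    have "char (distr M borel (Z p)) \<theta> = char (distr M borel (X k m)) (s p * \<theta>)"
      unfolding Z_def p by (simp add: char_distr_scale[OF Xm])
    also have "\<dots> = cf k (s p * \<theta>)" using law[OF km] unfolding has_stable_law_def cf_def by simp
    finally show ?thesis using p by simp
  qed
  have "char (distr M borel (Yv \<alpha> X n j)) \<theta> = (\<Prod>p\<in>Q. char (distr M borel (Z p)) \<theta>)"
    unfolding sumZ by (rule char_distr_sum[OF indQ])
  also have "\<dots> = (\<Prod>p\<in>Q. cf (fst p) (s p * \<theta>))" by (rule prod.cong) (simp_all add: charZ)
  also have "\<dots> = (\<Prod>p\<in>A. cf (fst p) (s p * \<theta>)) * (\<Prod>p\<in>B. cf (fst p) (s p * \<theta>))"
    unfolding Q_def by (rule prod.union_disjoint[OF finQ AB])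
  also have "(\<Prod>p\<in>A. cf (fst p) (s p * \<theta>)) = (\<Prod>k\<in>K. cf k (c * \<theta>))"
    unfolding A_def by (subst prod.reindex[OF injA]) (simp add: s_def)
  also have "(\<Prod>p\<in>B. cf (fst p) (s p * \<theta>)) = (\<Prod>k\<in>K. cf k (- (c * \<theta>)))"
    unfolding B_def by (subst prod.reindex[OF injB]) (simp add: sB)
  also have "(\<Prod>k\<in>K. cf k (c * \<theta>)) * (\<Prod>k\<in>K. cf k (- (c * \<theta>))) = (\<Prod>k\<in>K. cf k (c * \<theta>) * cf k (- (c * \<theta>)))"
    by (rule prod.distrib[symmetric])
  also have "\<dots> = (\<Prod>k\<in>K. exp (- complex_of_real (2 / real k * (\<bar>\<theta>\<bar> powr \<alpha> / real n))))"
  proof (rule prod.cong[OF refl])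
    fix k assume k: "k \<in> K"
    have kp: "real k > 0" using K1[OF k] by simp
    have "cf k (c * \<theta>) * cf k (- (c * \<theta>)) = exp (- complex_of_real (2 * (real k powr (- 1 / \<alpha>)) powr \<alpha> * \<bar>c * \<theta>\<bar> powr \<alpha>))"
      unfolding cf_def by (rule stable_cf_pair) (use ap in auto)
    also have "(real k powr (- 1 / \<alpha>)) powr \<alpha> = 1 / real k" using powr_inv_alpha[of "real k" \<alpha>] kp ap by simp
    also have "\<bar>c * \<theta>\<bar> powr \<alpha> = c powr \<alpha> * \<bar>\<theta>\<bar> powr \<alpha>" using c0 by (simp add: abs_mult powr_mult)
    also have "c powr \<alpha> = 1 / real n" unfolding c_def using powr_inv_alpha[of "real n" \<alpha>] n ap by simp
    finally show "cf k (c * \<theta>) * cf k (- (c * \<theta>)) = exp (- complex_of_real (2 / real k * (\<bar>\<theta>\<bar> powr \<alpha> / real n)))"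
      by simp
  qed
  also have "\<dots> = exp (\<Sum>k\<in>K. - complex_of_real (2 / real k * (\<bar>\<theta>\<bar> powr \<alpha> / real n)))"
    by (rule exp_sum[OF Kf, symmetric])
  also have "(\<Sum>k\<in>K. - complex_of_real (2 / real k * (\<bar>\<theta>\<bar> powr \<alpha> / real n))) = - complex_of_real (\<Sum>k\<in>K. 2 / real k * (\<bar>\<theta>\<bar> powr \<alpha> / real n))"
    by (simp only: sum_negf of_real_sum)
  also have "(\<Sum>k\<in>K. 2 / real k * (\<bar>\<theta>\<bar> powr \<alpha> / real n)) = Hs \<alpha> n * \<bar>\<theta>\<bar> powr \<alpha> / real n"
    unfolding Hs_def K_def[symmetric] by (simp only: sum_distrib_right times_divide_eq_right sum_divide_distrib)
  finally show ?thesis .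
qed


lemma Yv_indep:
  assumes tri: "triangular_array M X \<alpha>" and ap: "\<alpha> > 0" and big: "\<forall>k\<in>Kset \<alpha> n. n \<le> 4 ^ (k^2)"
  shows "prob_space.indep_vars M (\<lambda>_. borel) (Yv \<alpha> X n) {1..n}"
proof -
  interpret prob_space M using tri unfolding triangular_array_def by simp
  define K where "K = Kset \<alpha> n"
  have K1: "\<And>k. k \<in> K \<Longrightarrow> 1 \<le> k" unfolding K_def using Kset_pos[OF ap] by blast
  define d where "d k = (4::nat) ^ (k^2)" for k
  have dn: "n \<le> d k" if "k \<in> K" for k using big that unfolding K_def d_def by blast
  define P where "P j = (\<lambda>k. (k, j)) ` K \<union> (\<lambda>k. (k, j + d k)) ` K" for j
  define I0 where "I0 = {(k::nat, m::nat). 1 \<le> k \<and> 1 \<le> m}"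
  have ind0: "indep_vars (\<lambda>_. borel) (\<lambda>(k, m). X k m) I0"
    using tri unfolding triangular_array_def I0_def by simp
  have PI: "P j \<subseteq> I0" if "j \<in> {1..n}" for j unfolding P_def I0_def using K1 that by auto
  have disj: "disjoint_family_on P {1..n}"
    unfolding disjoint_family_on_def
  proof (intro ballI impI)
    fix i j assume ij: "i \<in> {1..n}" "j \<in> {1..n}" "i \<noteq> j"
    show "P i \<inter> P j = {}"
    proof (rule ccontr)
      assume "P i \<inter> P j \<noteq> {}"
      then obtain p where p: "p \<in> P i" "p \<in> P j" by blast
      from p(1) obtain k where k: "k \<in> K" "p = (k, i) \<or> p = (k, i + d k)" unfolding P_def by blast
      from p(2) obtain k' where k': "k' \<in> K" "p = (k', j) \<or> p = (k', j + d k')" unfolding P_def by blast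
      show False using k k' ij dn[OF k(1)] dn[OF k'(1)] by auto
    qed
  qed
  have ind1: "indep_vars (\<lambda>j. Pi\<^sub>M (P j) (\<lambda>_. borel)) (\<lambda>j \<omega>. restrict (\<lambda>i. (\<lambda>(k, m). X k m) i \<omega>) (P j)) {1..n}"
    by (rule indep_vars_restrict[OF ind0 PI disj])
  define h where "h j g = real n powr (- 1 / \<alpha>) * (\<Sum>k\<in>K. g (k, j) - g (k, j + d k))" for j and g :: "nat \<times> nat \<Rightarrow> real"
  have hm: "h j \<in> borel_measurable (Pi\<^sub>M (P j) (\<lambda>_. borel))" for j
  proof -
    have "(\<lambda>g::nat\<times>nat\<Rightarrow>real. g (k, j) - g (k, j + d k)) \<in> borel_measurable (Pi\<^sub>M (P j) (\<lambda>_. borel))" if "k \<in> K" for k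
    proof -
      have "(k, j) \<in> P j" "(k, j + d k) \<in> P j" using that unfolding P_def by auto
      then have "(\<lambda>g::nat\<times>nat\<Rightarrow>real. g (k, j)) \<in> borel_measurable (Pi\<^sub>M (P j) (\<lambda>_. borel))"
        "(\<lambda>g::nat\<times>nat\<Rightarrow>real. g (k, j + d k)) \<in> borel_measurable (Pi\<^sub>M (P j) (\<lambda>_. borel))"
        using measurable_component_singleton[of _ "P j" "\<lambda>_. borel :: real measure"] by auto
      then show ?thesis by (rule borel_measurable_diff)
    qed
    then show ?thesis unfolding h_def[abs_def]
      by (intro borel_measurable_times borel_measurable_const borel_measurable_sum) auto
  qed
  have ind2: "indep_vars (\<lambda>_. borel) (\<lambda>j \<omega>. h j (restrict (\<lambda>i. (\<lambda>(k, m). X k m) i \<omega>) (P j))) {1..n}"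
    by (rule indep_vars_compose2[OF ind1 hm])
  show ?thesis
  proof (subst indep_vars_cong[OF refl _ refl])
    show "indep_vars (\<lambda>_. borel) (\<lambda>j \<omega>. h j (restrict (\<lambda>i. (\<lambda>(k, m). X k m) i \<omega>) (P j))) {1..n}" by (rule ind2)
    fix j assume "j \<in> {1..n}"
    show "Yv \<alpha> X n j = (\<lambda>\<omega>. h j (restrict (\<lambda>i. (\<lambda>(k, m). X k m) i \<omega>) (P j)))"
    proof
      fix \<omega>
      have "(\<Sum>k\<in>K. restrict (\<lambda>i. (\<lambda>(k, m). X k m) i \<omega>) (P j) (k, j) - restrict (\<lambda>i. (\<lambda>(k, m). X k m) i \<omega>) (P j) (k, j + d k))
          = (\<Sum>k\<in>K. X k j \<omega> - X k (j + d k) \<omega>)"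
        by (rule sum.cong) (auto simp: P_def)
      then show "Yv \<alpha> X n j \<omega> = h j (restrict (\<lambda>i. (\<lambda>(k, m). X k m) i \<omega>) (P j))"
        unfolding h_def Yv_def K_def[symmetric] d_def by simp
    qed
  qed
qed


definition cc :: "real \<Rightarrow> nat \<Rightarrow> real" where
  "cc \<alpha> n = (Hs \<alpha> n / (2 * ln 2)) powr (1 / \<alpha>)"

definition Vv :: "real \<Rightarrow> ('b \<Rightarrow> real \<Rightarrow> real) \<Rightarrow> nat \<Rightarrow> nat \<Rightarrow> 'b \<Rightarrow> real" where
  "Vv \<alpha> W n j \<omega> = cc \<alpha> n * (W \<omega> (real j / real n) - W \<omega> (real (j - 1) / real n))"

lemma powr_alpha_inv: "0 \<le> (x::real) \<Longrightarrow> \<alpha> \<noteq> 0 \<Longrightarrow> (x powr (1 / \<alpha>)) powr \<alpha> = x"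
  by (simp add: powr_powr)

lemma Hs_nonneg: "0 \<le> Hs \<alpha> n"
  unfolding Hs_def by (intro sum_nonneg) auto

lemma grid01: "j \<in> {1..n} \<Longrightarrow> 0 \<le> real j / real n \<and> real j / real n \<le> 1 \<and> 0 \<le> real (j - 1) / real n \<and> real (j - 1) / real n \<le> 1"
  by (auto simp: divide_simps)

lemma Vv_meas:
  assumes lev: "levy_motion N W \<alpha> \<sigma> 0" and j: "j \<in> {1..n}"
  shows "Vv \<alpha> W n j \<in> borel_measurable N"
proof -
  have "(\<lambda>\<omega>. W \<omega> t) \<in> borel_measurable N" if "t \<in> {0..1}" for t
    using lev that unfolding levy_motion_def by blast
  then show ?thesis unfolding Vv_def[abs_def] using grid01[OF j]
    by (intro borel_measurable_times borel_measurable_const borel_measurable_diff) auto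
qed

lemma Vv_indep:
  assumes lev: "levy_motion N W \<alpha> \<sigma> 0" and n: "1 \<le> n"
  shows "prob_space.indep_vars N (\<lambda>_. borel) (Vv \<alpha> W n) {1..n}"
proof -
  interpret prob_space N using lev unfolding levy_motion_def by simp
  define ts where "ts i = real i / real n" for i
  have "0 \<le> ts 0" "ts n \<le> 1" unfolding ts_def using n by auto
  moreover have "strict_mono_on {0..n} ts" unfolding ts_def using n
    by (auto simp: strict_mono_on_def divide_strict_right_mono)
  ultimately have ind: "indep_vars (\<lambda>_. borel) (\<lambda>i \<omega>. W \<omega> (ts i) - W \<omega> (ts (i - 1))) {1..n}"
    using lev unfolding levy_motion_def by blast
  have "indep_vars (\<lambda>_. borel) (\<lambda>i \<omega>. cc \<alpha> n * (W \<omega> (ts i) - W \<omega> (ts (i - 1)))) {1..n}"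
    by (rule indep_vars_compose2[OF ind, where Y = "\<lambda>i x. cc \<alpha> n * x"]) simp
  then show ?thesis unfolding Vv_def[abs_def] ts_def by simp
qed

lemma Vv_char:
  assumes lev: "levy_motion N W \<alpha> ((2 * ln 2) powr (1 / \<alpha>)) 0" and a: "1 \<le> \<alpha>" and j: "j \<in> {1..n}"
  shows "char (distr N borel (Vv \<alpha> W n j)) \<theta> = exp (- complex_of_real (Hs \<alpha> n * \<bar>\<theta>\<bar> powr \<alpha> / real n))"
proof -
  interpret prob_space N using lev unfolding levy_motion_def by simp
  have ap: "\<alpha> > 0" using a by simp
  have n: "real n \<ge> 1" using j by auto
  define s where "s = real (j - 1) / real n"
  define t where "t = real j / real n"
  have st: "0 \<le> s" "s < t" "t \<le> 1" unfolding s_def t_def using j n by (auto simp: divide_simps)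
  have ts: "t - s = 1 / real n" unfolding s_def t_def using j by (simp add: of_nat_diff diff_divide_distrib[symmetric])
  define \<sigma> where "\<sigma> = (2 * ln 2) powr (1 / \<alpha>)"
  define D where "D \<omega> = W \<omega> t - W \<omega> s" for \<omega>
  have law: "has_stable_law N D \<alpha> (\<sigma> * (t - s) powr (1 / \<alpha>)) 0 0"
    using lev st unfolding levy_motion_def D_def \<sigma>_def by blast
  have Dm: "D \<in> borel_measurable N" using law unfolding has_stable_law_def by simp
  have V: "Vv \<alpha> W n j = (\<lambda>\<omega>. cc \<alpha> n * D \<omega>)" unfolding Vv_def[abs_def] D_def s_def t_def by simp
  have "char (distr N borel (Vv \<alpha> W n j)) \<theta> = char (distr N borel D) (cc \<alpha> n * \<theta>)"
    unfolding V by (rule char_distr_scale[OF Dm])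
  also have "\<dots> = stable_cf \<alpha> (\<sigma> * (t - s) powr (1 / \<alpha>)) 0 0 (cc \<alpha> n * \<theta>)"
    using law unfolding has_stable_law_def by simp
  also have "\<dots> = exp (- complex_of_real ((\<sigma> * (t - s) powr (1 / \<alpha>)) powr \<alpha> * \<bar>cc \<alpha> n * \<theta>\<bar> powr \<alpha>))"
    by (rule stable_cf_beta0) (use ap st in \<open>auto simp: \<sigma>_def\<close>)
  also have "(\<sigma> * (t - s) powr (1 / \<alpha>)) powr \<alpha> = 2 * ln 2 * (1 / real n)"
  proof -
    have "(\<sigma> * (t - s) powr (1 / \<alpha>)) powr \<alpha> = \<sigma> powr \<alpha> * ((t - s) powr (1 / \<alpha>)) powr \<alpha>"
      unfolding \<sigma>_def by (rule powr_mult)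
    also have "\<sigma> powr \<alpha> = 2 * ln 2" unfolding \<sigma>_def using ap by (intro powr_alpha_inv) auto
    also have "((t - s) powr (1 / \<alpha>)) powr \<alpha> = t - s" using ap st by (intro powr_alpha_inv) auto
    finally show ?thesis using ts by simp
  qed
  also have "\<bar>cc \<alpha> n * \<theta>\<bar> powr \<alpha> = Hs \<alpha> n / (2 * ln 2) * \<bar>\<theta>\<bar> powr \<alpha>"
  proof -
    have c0: "0 \<le> cc \<alpha> n" unfolding cc_def by simp
    have "\<bar>cc \<alpha> n * \<theta>\<bar> powr \<alpha> = cc \<alpha> n powr \<alpha> * \<bar>\<theta>\<bar> powr \<alpha>" using c0 by (simp add: abs_mult powr_mult)
    also have "cc \<alpha> n powr \<alpha> = Hs \<alpha> n / (2 * ln 2)" unfolding cc_def using ap Hs_nonneg by (intro powr_alpha_inv) auto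
    finally show ?thesis .
  qed
  also have "2 * ln 2 * (1 / real n) * (Hs \<alpha> n / (2 * ln 2) * \<bar>\<theta>\<bar> powr \<alpha>) = Hs \<alpha> n * \<bar>\<theta>\<bar> powr \<alpha> / real n"
    by simp
  finally show ?thesis .
qed


lemma big_d:
  assumes a: "1 \<le> \<alpha>" "\<alpha> < 2" and n: "256 \<le> n" and k: "k \<in> Kset \<alpha> n"
  shows "n \<le> 4 ^ (k^2)"
proof -
  define L where "L = log 2 (real n)"
  have np: "real n > 0" using n by simp
  have L8: "8 \<le> L"
  proof -
    have "log 2 256 \<le> log 2 (real n)" using n by (subst log_le_cancel_iff) auto
    moreover have "log 2 (256::real) = 8"
    proof -
      have "(256::real) = 2 powr 8" by simp
      then show ?thesis by (simp only:) (rule log_powr_cancel; simp)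
    qed
    ultimately show ?thesis unfolding L_def by simp
  qed
  have kL: "L / (2 * \<alpha>) < real k" using k unfolding Kset_def L_def by simp
  have "L / 4 \<le> L / (2 * \<alpha>)" using a L8 by (intro divide_left_mono) auto
  then have k4: "L < 4 * real k" using kL by linarith
  then have k2: "2 \<le> real k" using L8 by linarith
  have "L \<le> 2 * real k * real k"
  proof -
    have "2 * real k * 2 \<le> 2 * real k * real k" using k2 by (intro mult_left_mono) auto
    then show ?thesis using k4 by linarith
  qed
  then have "2 powr L \<le> 2 powr (2 * real k * real k)" by simp
  moreover have "2 powr L = real n" unfolding L_def using np by simp
  moreover have "2 powr (2 * real k * real k) = real (4 ^ (k^2))"
  proof -
    have "real (4 ^ (k^2)) = (2::real) ^ (2 * k^2)" by (simp add: power_mult)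
    also have "\<dots> = 2 powr (real (2 * k^2))" by (rule powr_realpow[symmetric]) simp
    finally show ?thesis by (simp add: power2_eq_square mult.assoc)
  qed
  ultimately have "real n \<le> real (4 ^ (k^2))" by simp
  then show ?thesis by linarith
qed

lemma tele: "(\<Sum>j=1..(p::nat). g j - g (j - 1)) = g p - (g 0 :: real)"
  by (induction p) auto


lemma WM_spath:
  assumes t: "t \<in> {0..1}"
  shows "WM \<alpha> X n \<omega> t = spath n (\<lambda>j. Yv \<alpha> X n j \<omega>) t"
proof -
  have "real n * t \<le> real n" using t by (simp add: mult_left_le)
  then have "\<lfloor>real n * t\<rfloor> \<le> int n" by (simp add: floor_le_iff)
  then have mn: "min n (nat \<lfloor>real n * t\<rfloor>) = nat \<lfloor>real n * t\<rfloor>" by simp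
  define p where "p = nat \<lfloor>real n * t\<rfloor>"
  define c where "c = real n powr (- 1 / \<alpha>)"
  define h where "h k j = X k j \<omega> - X k (j + 4 ^ (k^2)) \<omega>" for k j
  have "WM \<alpha> X n \<omega> t = c * (\<Sum>k\<in>Kset \<alpha> n. \<Sum>j=1..p. h k j)"
    unfolding WM_def Kset_def[symmetric] p_def c_def h_def by simp
  also have "(\<Sum>k\<in>Kset \<alpha> n. \<Sum>j=1..p. h k j) = (\<Sum>j=1..p. \<Sum>k\<in>Kset \<alpha> n. h k j)" by (rule sum.swap)
  also have "c * \<dots> = (\<Sum>j=1..p. c * (\<Sum>k\<in>Kset \<alpha> n. h k j))" by (rule sum_distrib_left)
  also have "\<dots> = spath n (\<lambda>j. Yv \<alpha> X n j \<omega>) t"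
  proof -
    have mnp: "min n p = p" unfolding p_def using mn .
    show ?thesis unfolding spath_def Yv_def p_def[symmetric] mnp c_def h_def by simp
  qed
  finally show ?thesis .
qed

lemma cadlag_WM: "cadlag01 (WM \<alpha> X n \<omega>)"
proof -
  have "WM \<alpha> X n \<omega> = (\<lambda>t. (\<lambda>z. real n powr (- 1 / \<alpha>) * (\<Sum>k\<in>Kset \<alpha> n. \<Sum>j=1..nat z. X k j \<omega> - X k (j + 4 ^ (k^2)) \<omega>)) \<lfloor>real n * t\<rfloor>)"
    unfolding WM_def[abs_def] Kset_def by simp
  then show ?thesis by (simp only:) (rule cadlag_floor)
qed

lemma f_WM:
  assumes f: "bdd_J1_continuous f"
  shows "f (WM \<alpha> X n \<omega>) = f (spath n (\<lambda>j. Yv \<alpha> X n j \<omega>))"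
  by (rule f_eq01[OF f cadlag_spath cadlag_WM]) (simp add: WM_spath)

lemma spath_V:
  assumes "W \<omega> 0 = 0"
  shows "spath n (\<lambda>j. Vv \<alpha> W n j \<omega>) = (\<lambda>t. cc \<alpha> n * W \<omega> (real (min n (nat \<lfloor>real n * t\<rfloor>)) / real n))"
proof
  fix t
  define p where "p = min n (nat \<lfloor>real n * t\<rfloor>)"
  define g where "g j = W \<omega> (real j / real n)" for j
  have "spath n (\<lambda>j. Vv \<alpha> W n j \<omega>) t = (\<Sum>j=1..p. cc \<alpha> n * (g j - g (j - 1)))"
    unfolding spath_def Vv_def p_def[symmetric] g_def by simp
  also have "\<dots> = cc \<alpha> n * (\<Sum>j=1..p. g j - g (j - 1))" by (rule sum_distrib_left[symmetric])
  also have "\<dots> = cc \<alpha> n * (g p - g 0)" by (simp only: tele)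
  also have "g 0 = 0" unfolding g_def using assms by simp
  finally show "spath n (\<lambda>j. Vv \<alpha> W n j \<omega>) t = cc \<alpha> n * W \<omega> (real (min n (nat \<lfloor>real n * t\<rfloor>)) / real n)"
    unfolding g_def p_def by simp
qed

lemma cc_lim: assumes "1 \<le> \<alpha>" shows "cc \<alpha> \<longlonglongrightarrow> 1"
proof -
  have "(\<lambda>n. Hs \<alpha> n / (2 * ln 2)) \<longlonglongrightarrow> 2 * ln 2 / (2 * ln 2)"
    by (intro tendsto_intros Hs_lim assms) simp
  then have h: "(\<lambda>n. Hs \<alpha> n / (2 * ln 2)) \<longlonglongrightarrow> 1" by simp
  have "(\<lambda>n. (Hs \<alpha> n / (2 * ln 2)) powr (1 / \<alpha>)) \<longlonglongrightarrow> 1 powr (1 / \<alpha>)"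
    by (rule tendsto_powr[OF h tendsto_const]) simp
  then show ?thesis unfolding cc_def[abs_def] by simp
qed

lemma vec_meas:
  fixes n :: nat
  assumes "\<And>j. j \<in> {1..n} \<Longrightarrow> Z j \<in> borel_measurable M"
  shows "(\<lambda>\<omega>. (\<lambda>j. if j \<in> {1..n} then Z j \<omega> else (0::real))) \<in> borel_measurable M"
proof (rule measurable_coordinatewise_then_product)
  fix j
  show "(\<lambda>\<omega>. if j \<in> {1..n} then Z j \<omega> else 0) \<in> borel_measurable M"
    using assms by (cases "j \<in> {1..n}") auto
qed

lemma ext_meas:
  fixes n :: nat
  shows "(\<lambda>h. (\<lambda>j. if j \<in> {1..n} then h j else (0::real))) \<in> borel_measurable (Pi\<^sub>M {1..n} (\<lambda>_. borel))"
proof (rule measurable_coordinatewise_then_product)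
  fix j
  show "(\<lambda>h. if j \<in> {1..n} then h j else (0::real)) \<in> borel_measurable (Pi\<^sub>M {1..n} (\<lambda>_. borel))"
  proof (cases "j \<in> {1..n}")
    case True
    then have e: "(\<lambda>h. if j \<in> {1..n} then h j else (0::real)) = (\<lambda>h. h j)" by auto
    show ?thesis unfolding e by (rule measurable_component_singleton[OF True])
  next
    case False
    then have e: "(\<lambda>h. if j \<in> {1..n} then h j else (0::real)) = (\<lambda>_. 0)" by auto
    show ?thesis unfolding e by (rule borel_measurable_const)
  qed
qed


theorem lemma4p6:
  fixes M :: "'a measure" and X :: "nat \<Rightarrow> nat \<Rightarrow> 'a \<Rightarrow> real" and \<alpha> :: real
    and N :: "'b measure" and W :: "'b \<Rightarrow> real \<Rightarrow> real"
  assumes "1 \<le> \<alpha>" and "\<alpha> < 2"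
    and "triangular_array M X \<alpha>"
    and "levy_motion N W \<alpha> ((2 * ln 2) powr (1 / \<alpha>)) 0"
  shows "converges_in_dist_J1 M (WM \<alpha> X) N W"
proof -
  have ap: "\<alpha> > 0" using assms(1) by simp
  note tri = assms(3) and lev = assms(4)
  interpret M: prob_space M using tri unfolding triangular_array_def by simp
  interpret N: prob_space N using lev unfolding levy_motion_def by simp
  have Wc: "cadlag01 (W \<omega>) \<and> W \<omega> 0 = 0" if "\<omega> \<in> space N" for \<omega>
    using lev that unfolding levy_motion_def by blast
  show ?thesis unfolding converges_in_dist_J1_def
  proof (intro allI impI)
    fix f assume f: "bdd_J1_continuous f"
    obtain B where B: "\<forall>x. cadlag01 x \<longrightarrow> \<bar>f x\<bar> \<le> B" using f unfolding bdd_J1_continuous_def by blast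
    define vY where "vY n \<omega> = (\<lambda>j. if j \<in> {1..n} then Yv \<alpha> X n j \<omega> else 0)" for n \<omega>
    define vV where "vV n \<omega> = (\<lambda>j. if j \<in> {1..n} then Vv \<alpha> W n j \<omega> else 0)" for n \<omega>
    have fWM: "f (WM \<alpha> X n \<omega>) = f (spath n (vY n \<omega>))" for n \<omega>
      using f_WM[OF f] spath_ext unfolding vY_def by metis
    have vYm: "vY n \<in> borel_measurable M" for n
      unfolding vY_def[abs_def] by (rule vec_meas) (use Yv_meas[OF tri ap] in auto)
    have vVm: "vV n \<in> borel_measurable N" for n
      unfolding vV_def[abs_def] by (rule vec_meas) (use Vv_meas[OF lev] in auto)
    have Gm: "(\<lambda>y. f (spath n y)) \<in> borel_measurable borel" for n using G_measurable[OF f] .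
    have measM: "(\<lambda>\<omega>. f (WM \<alpha> X n \<omega>)) \<in> borel_measurable M" for n
      unfolding fWM using measurable_comp[OF vYm Gm] by (simp add: comp_def)
    define s where "s n \<omega> = f (spath n (vV n \<omega>))" for n \<omega>
    have sm: "s n \<in> borel_measurable N" for n
      unfolding s_def using measurable_comp[OF vVm Gm] by (simp add: comp_def)
    have sB: "\<bar>s n \<omega>\<bar> \<le> B" for n \<omega> unfolding s_def using B cadlag_spath by blast
    have slim: "(\<lambda>n. s n \<omega>) \<longlonglongrightarrow> f (W \<omega>)" if \<omega>: "\<omega> \<in> space N" for \<omega>
    proof -
      define y where "y n = (\<lambda>t. cc \<alpha> n * W \<omega> (real (min n (nat \<lfloor>real n * t\<rfloor>)) / real n))" for n
      have eq: "s n \<omega> = f (y n)" for n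
        unfolding s_def vV_def spath_ext spath_V[of W \<omega>, OF Wc[OF \<omega>, THEN conjunct2]] y_def ..
      have yc: "cadlag01 (y n)" for n
        unfolding y_def using cadlag_floor[of "\<lambda>z. cc \<alpha> n * W \<omega> (real (min n (nat z)) / real n)" n] by simp
      show ?thesis unfolding eq tendsto_iff
      proof (intro allI impI)
        fix e :: real assume e: "e > 0"
        obtain d where d: "d > 0" "\<forall>z. cadlag01 z \<longrightarrow> skorokhod_J1 (W \<omega>) z < d \<longrightarrow> \<bar>f z - f (W \<omega>)\<bar> < e"
          using f Wc[OF \<omega>] e unfolding bdd_J1_continuous_def by blast
        show "eventually (\<lambda>n. dist (f (y n)) (f (W \<omega>)) < e) sequentially"
          using disc_J1[OF Wc[OF \<omega>, THEN conjunct1] cc_lim[OF assms(1)] d(1)]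
        proof eventually_elim
          case (elim n)
          then have "skorokhod_J1 (W \<omega>) (y n) < d" unfolding y_def .
          then show ?case using d(2) yc[of n] by (simp add: dist_real_def)
        qed
      qed
    qed
    have measW: "(\<lambda>\<omega>. f (W \<omega>)) \<in> borel_measurable N"
      by (rule borel_measurable_LIMSEQ_real[OF slim sm])
    have lim: "(\<lambda>n. \<integral>\<omega>. s n \<omega> \<partial>N) \<longlonglongrightarrow> (\<integral>\<omega>. f (W \<omega>) \<partial>N)"
    proof (rule integral_dominated_convergence[where w = "\<lambda>_. B"])
      show "integrable N (\<lambda>_. B)" by simp
      show "AE x in N. (\<lambda>i. s i x) \<longlonglongrightarrow> f (W x)" using slim by (intro AE_I2) auto
      show "AE x in N. norm (s i x) \<le> B" for i using sB by (intro AE_I2) auto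
    qed (use measW sm in auto)
    have eqI: "eventually (\<lambda>n. (\<integral>\<omega>. f (WM \<alpha> X n \<omega>) \<partial>M) = (\<integral>\<omega>. s n \<omega> \<partial>N)) sequentially"
      using eventually_ge_at_top[of 256]
    proof eventually_elim
      case (elim n)
      have n1: "1 \<le> n" using elim by simp
      have big: "\<forall>k\<in>Kset \<alpha> n. n \<le> 4 ^ (k^2)" using big_d[OF assms(1,2) elim] by blast
      define PB where "PB = Pi\<^sub>M {1..n} (\<lambda>_. borel :: real measure)"
      define Gx where "Gx h = f (spath n (\<lambda>j. if j \<in> {1..n} then h j else 0))" for h
      have Gxm: "Gx \<in> borel_measurable PB"
        unfolding Gx_def[abs_def] PB_def using measurable_comp[OF ext_meas Gm] by (simp add: comp_def)
      have rY: "(\<lambda>\<omega>. \<lambda>j\<in>{1..n}. Yv \<alpha> X n j \<omega>) \<in> measurable M PB"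
        unfolding PB_def by (rule measurable_restrict) (use Yv_meas[OF tri ap] in auto)
      have rV: "(\<lambda>\<omega>. \<lambda>j\<in>{1..n}. Vv \<alpha> W n j \<omega>) \<in> measurable N PB"
        unfolding PB_def by (rule measurable_restrict) (use Vv_meas[OF lev] in auto)
      have ne: "{1..n} \<noteq> {}" using n1 by auto
      have dY: "distr M PB (\<lambda>\<omega>. \<lambda>j\<in>{1..n}. Yv \<alpha> X n j \<omega>) = Pi\<^sub>M {1..n} (\<lambda>j. distr M borel (Yv \<alpha> X n j))"
        unfolding PB_def
        by (rule M.indep_vars_iff_distr_eq_PiM'[THEN iffD1, OF ne _ Yv_indep[OF tri ap big]])
           (use Yv_meas[OF tri ap] in auto)
      have dV: "distr N PB (\<lambda>\<omega>. \<lambda>j\<in>{1..n}. Vv \<alpha> W n j \<omega>) = Pi\<^sub>M {1..n} (\<lambda>j. distr N borel (Vv \<alpha> W n j))"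
        unfolding PB_def
        by (rule N.indep_vars_iff_distr_eq_PiM'[THEN iffD1, OF ne _ Vv_indep[OF lev n1]])
           (use Vv_meas[OF lev] in auto)
      have marg: "distr M borel (Yv \<alpha> X n j) = distr N borel (Vv \<alpha> W n j)" if j: "j \<in> {1..n}" for j
      proof (rule Levy_uniqueness)
        show "real_distribution (distr M borel (Yv \<alpha> X n j))" using Yv_meas[OF tri ap] j by auto
        show "real_distribution (distr N borel (Vv \<alpha> W n j))" using Vv_meas[OF lev j] by auto
        show "char (distr M borel (Yv \<alpha> X n j)) = char (distr N borel (Vv \<alpha> W n j))"
          using Yv_char[OF tri assms(1) n1] Vv_char[OF lev assms(1) j] j by auto
      qed
      have PiEq: "Pi\<^sub>M {1..n} (\<lambda>j. distr M borel (Yv \<alpha> X n j)) = Pi\<^sub>M {1..n} (\<lambda>j. distr N borel (Vv \<alpha> W n j))"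
        by (rule PiM_cong) (simp_all add: marg)
      have rr: "(\<lambda>j. if j \<in> {1..n} then restrict g {1..n} j else (0::real)) = (\<lambda>j. if j \<in> {1..n} then g j else 0)" for g
        by auto
      have "(\<integral>\<omega>. f (WM \<alpha> X n \<omega>) \<partial>M) = (\<integral>\<omega>. Gx (\<lambda>j\<in>{1..n}. Yv \<alpha> X n j \<omega>) \<partial>M)"
        unfolding fWM Gx_def vY_def rr ..
      also have "\<dots> = integral\<^sup>L (distr M PB (\<lambda>\<omega>. \<lambda>j\<in>{1..n}. Yv \<alpha> X n j \<omega>)) Gx"
        by (rule integral_distr[OF rY Gxm, symmetric])
      also have "\<dots> = integral\<^sup>L (distr N PB (\<lambda>\<omega>. \<lambda>j\<in>{1..n}. Vv \<alpha> W n j \<omega>)) Gx"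
        unfolding dY dV PiEq ..
      also have "\<dots> = (\<integral>\<omega>. Gx (\<lambda>j\<in>{1..n}. Vv \<alpha> W n j \<omega>) \<partial>N)"
        by (rule integral_distr[OF rV Gxm])
      also have "\<dots> = (\<integral>\<omega>. s n \<omega> \<partial>N)"
        unfolding s_def Gx_def vV_def rr ..
      finally show ?case .
    qed
    show "(\<forall>n. (\<lambda>\<omega>. f (WM \<alpha> X n \<omega>)) \<in> borel_measurable M) \<and>
          (\<lambda>\<omega>. f (W \<omega>)) \<in> borel_measurable N \<and>
          (\<lambda>n. \<integral>\<omega>. f (WM \<alpha> X n \<omega>) \<partial>M) \<longlonglongrightarrow> (\<integral>\<omega>. f (W \<omega>) \<partial>N)"
    proof (intro conjI allI)
      show "(\<lambda>\<omega>. f (WM \<alpha> X n \<omega>)) \<in> borel_measurable M" for n by (rule measM)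
      show "(\<lambda>\<omega>. f (W \<omega>)) \<in> borel_measurable N" by (rule measW)
      show "(\<lambda>n. \<integral>\<omega>. f (WM \<alpha> X n \<omega>) \<partial>M) \<longlonglongrightarrow> (\<integral>\<omega>. f (W \<omega>) \<partial>N)"
        by (rule Lim_transform_eventually[OF lim]) (use eqI in \<open>auto elim: eventually_mono\<close>)
    qed
  qed
qed

end
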